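(* Let $A$ be a commutative $C^*$-algebra and $a,h\in A$ positive elements of norm one with $\|a-h\|<\delta$ for some $0<\delta\le 1$. Then there are $h'\in C^*(h)_+$ and $g\in C^*(h,a)_+$ with $\|h-h'\|<\delta$ and $\|g\|\le 1$ such that $ga=h'$.
   Context: $C^*(S)$ denotes the $C^*$-subalgebra generated by $S$, and the subscript $+$ denotes its positive elements. *)

theory Defs
  imports "HOL-Analysis.Analysis"
begin

class comm_cstar_algebra = real_normed_algebra + banach + comm_ring +
  fixes scaleC :: "complex \<Rightarrow> 'a \<Rightarrow> 'a"
    and star :: "'a \<Rightarrow> 'a"
  assumes scaleC_of_real: "scaleC (complex_of_real r) x = scaleR r x"
    and scaleC_add_right: "scaleC c (x + y) = scaleC c x + scaleC c y"
    and scaleC_add_left: "scaleC (c + d) x = scaleC c x + scaleC d x"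
    and scaleC_scaleC: "scaleC c (scaleC d x) = scaleC (c * d) x"
    and scaleC_one: "scaleC 1 x = x"
    and scaleC_mult_left: "scaleC c x * y = scaleC c (x * y)"
    and norm_scaleC: "norm (scaleC c x) = cmod c * norm x"
    and star_star: "star (star x) = x"
    and star_add: "star (x + y) = star x + star y"
    and star_mult: "star (x * y) = star y * star x"
    and star_scaleC: "star (scaleC c x) = scaleC (cnj c) (star x)"
    and cstar_identity: "norm (star x * x) = (norm x)\<^sup>2"

definition positive :: "'a::comm_cstar_algebra \<Rightarrow> bool" where
  "positive x \<longleftrightarrow> (\<exists>b. x = star b * b)"

definition cstar_subalgebra :: "'a::comm_cstar_algebra set \<Rightarrow> bool" where
  "cstar_subalgebra B \<longleftrightarrow>
     0 \<in> B \<and> (\<forall>x\<in>B. \<forall>y\<in>B. x + y \<in> B \<and> x * y \<in> B) \<and>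
     (\<forall>c. \<forall>x\<in>B. scaleC c x \<in> B) \<and> (\<forall>x\<in>B. star x \<in> B) \<and> closed B"

definition cstar_gen :: "'a::comm_cstar_algebra set \<Rightarrow> 'a set" where
  "cstar_gen S = \<Inter>{B. cstar_subalgebra B \<and> S \<subseteq> B}"

end

theory Submission
  imports Defs "HOL-Computational_Algebra.Formal_Power_Series"
begin


context comm_cstar_algebra
begin

lemma scaleC_zero_right [simp]: "scaleC c 0 = 0"
proof -
  have "scaleC c 0 = scaleC c 0 + scaleC c 0" using scaleC_add_right[of c 0 0] by simp
  then show ?thesis by simp
qed

lemma scaleC_zero_left [simp]: "scaleC 0 x = 0"
proof -
  have "scaleC 0 x = scaleC 0 x + scaleC 0 x" using scaleC_add_left[of 0 0 x] by simp
  then show ?thesis by simp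
qed

lemma scaleC_minus_right: "scaleC c (- x) = - scaleC c x"
proof -
  have "scaleC c (- x) + scaleC c x = 0" by (simp flip: scaleC_add_right)
  then show ?thesis by (simp add: eq_neg_iff_add_eq_0)
qed

lemma scaleC_minus_left: "scaleC (- c) x = - scaleC c x"
proof -
  have "scaleC (- c) x + scaleC c x = 0" by (simp flip: scaleC_add_left)
  then show ?thesis by (simp add: eq_neg_iff_add_eq_0)
qed

lemma scaleC_diff_right: "scaleC c (x - y) = scaleC c x - scaleC c y"
  using scaleC_add_right[of c x "-y"] scaleC_minus_right[of c y] by simp

lemma scaleC_diff_left: "scaleC (c - d) x = scaleC c x - scaleC d x"
  using scaleC_add_left[of c "-d" x] scaleC_minus_left[of d x] by simp

lemma scaleC_mult_right: "x * scaleC c y = scaleC c (x * y)"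
  by (simp add: mult.commute[of x] scaleC_mult_left)

lemma scaleC_sum: "scaleC c (sum f S) = sum (\<lambda>i. scaleC c (f i)) S"
  by (induction S rule: infinite_finite_induct) (auto simp: scaleC_add_right)

lemma scaleC_sum_left: "scaleC (sum f S) x = sum (\<lambda>i. scaleC (f i) x) S"
  by (induction S rule: infinite_finite_induct) (auto simp: scaleC_add_left)

lemma scaleC_real: "scaleC (complex_of_real r) x = r *\<^sub>R x"
  by (rule scaleC_of_real)

lemma star_zero [simp]: "star 0 = 0"
proof -
  have "star 0 = star 0 + star 0" using star_add[of 0 0] by simp
  then show ?thesis by simp
qed

lemma star_minus: "star (- x) = - star x"
proof -
  have "star (- x) + star x = 0" by (simp flip: star_add)
  then show ?thesis by (simp add: eq_neg_iff_add_eq_0)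
qed

lemma star_diff: "star (x - y) = star x - star y"
  using star_add[of x "-y"] star_minus[of y] by simp

lemma star_sum: "star (sum f S) = sum (\<lambda>i. star (f i)) S"
  by (induction S rule: infinite_finite_induct) (auto simp: star_add)

lemma star_scaleR: "star (r *\<^sub>R x) = r *\<^sub>R star x"
  using star_scaleC[of "complex_of_real r" x] by (simp add: scaleC_of_real)

lemma star_mult_comm: "star (x * y) = star x * star y"
  by (simp add: star_mult mult.commute)

lemma norm_star_le: "norm (star x) \<le> norm x"
proof -
  have "(norm (star x))\<^sup>2 = norm (star (star x) * star x)" by (rule cstar_identity[symmetric])
  also have "\<dots> = norm (x * star x)" by (simp add: star_star)
  also have "\<dots> \<le> norm x * norm (star x)" by (rule norm_mult_ineq)
  finally have "norm (star x) * norm (star x) \<le> norm x * norm (star x)" by (simp add: power2_eq_square)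
  then show ?thesis
    by (cases "norm (star x) = 0") (auto simp: mult_le_cancel_right)
qed

lemma norm_star [simp]: "norm (star x) = norm x"
  using norm_star_le[of x] norm_star_le[of "star x"] by (simp add: star_star)

end

lemma bounded_linear_star: "bounded_linear (star :: 'a::comm_cstar_algebra \<Rightarrow> 'a)"
  by (rule bounded_linear_intro[where K=1]) (auto simp: star_add star_scaleR)


section \<open>Unitization\<close>

datatype 'a ua = UA (uA: 'a) (uC: complex)

instantiation ua :: (comm_cstar_algebra) comm_ring_1
begin
definition "0 = UA 0 0"
definition "1 = UA 0 1"
definition "X + Y = UA (uA X + uA Y) (uC X + uC Y)"
definition "- X = UA (- uA X) (- uC X)"
definition "X - Y = UA (uA X - uA Y) (uC X - uC Y)"
definition "X * Y = UA (uA X * uA Y + scaleC (uC X) (uA Y) + scaleC (uC Y) (uA X)) (uC X * uC Y)"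
instance
proof
  fix a b c :: "'a ua"
  show "a * b * c = a * (b * c)"
  proof (cases a; cases b; cases c)
    fix x l y m z n assume [simp]: "a = UA x l" "b = UA y m" "c = UA z n"
    have "uA (a * b * c) = x*y*z + scaleC l (y*z) + scaleC m (x*z) + scaleC (l*m) z + scaleC n (x*y) + scaleC (n*l) y + scaleC (n*m) x"
      by (simp add: times_ua_def scaleC_add_right scaleC_mult_left scaleC_scaleC distrib_right)
    moreover have "uA (a * (b * c)) = x*y*z + scaleC l (y*z) + scaleC m (x*z) + scaleC (l*m) z + scaleC n (x*y) + scaleC (n*l) y + scaleC (n*m) x"
      by (simp add: times_ua_def scaleC_add_right scaleC_mult_right scaleC_scaleC distrib_left mult.assoc mult.commute[of m n] mult.commute[of l n] mult.commute[of l m] add_ac)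
    ultimately show ?thesis by (simp add: times_ua_def mult.assoc)
  qed
  show "a * b = b * a" by (simp add: times_ua_def mult.commute add_ac)
  show "1 * a = a" by (simp add: times_ua_def one_ua_def scaleC_one)
  show "a + b + c = a + (b + c)" by (simp add: plus_ua_def algebra_simps)
  show "a + b = b + a" by (simp add: plus_ua_def algebra_simps)
  show "0 + a = a" by (simp add: plus_ua_def zero_ua_def)
  show "- a + a = 0" by (simp add: plus_ua_def zero_ua_def uminus_ua_def)
  show "a - b = a + - b" by (simp add: plus_ua_def minus_ua_def uminus_ua_def)
  show "(a + b) * c = a * c + b * c"
    by (simp add: times_ua_def plus_ua_def distrib_right scaleC_add_right scaleC_add_left add_ac)
  show "(0::'a ua) \<noteq> 1" by (simp add: zero_ua_def one_ua_def)
qed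
end

lemma uA_simps [simp]:
  "uA 0 = 0" "uC 0 = 0" "uA 1 = 0" "uC 1 = 1"
  "uA (X + Y) = uA X + uA Y" "uC (X + Y) = uC X + uC Y"
  "uA (- X) = - uA X" "uC (- X) = - uC X"
  "uA (X - Y) = uA X - uA Y" "uC (X - Y) = uC X - uC Y"
  "uA (X * Y) = uA X * uA Y + scaleC (uC X) (uA Y) + scaleC (uC Y) (uA X)"
  "uC (X * Y) = uC X * uC Y"
  for X Y :: "'a::comm_cstar_algebra ua"
  by (simp_all add: zero_ua_def one_ua_def plus_ua_def uminus_ua_def minus_ua_def times_ua_def)

lemma ua_eqI: "uA X = uA Y \<Longrightarrow> uC X = uC Y \<Longrightarrow> X = Y"
  by (cases X; cases Y) auto

definition emb :: "'a::comm_cstar_algebra \<Rightarrow> 'a ua" where "emb x = UA x 0"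
definition cc :: "complex \<Rightarrow> 'a::comm_cstar_algebra ua" where "cc c = UA 0 c"
definition ustar :: "'a::comm_cstar_algebra ua \<Rightarrow> 'a ua" where "ustar X = UA (star (uA X)) (cnj (uC X))"
definition act :: "'a::comm_cstar_algebra ua \<Rightarrow> 'a \<Rightarrow> 'a" where "act X z = uA (X * emb z)"

lemma emb_simps [simp]: "uA (emb x) = x" "uC (emb x) = 0" "uA (cc c) = 0" "uC (cc c) = c"
  "uA (ustar X) = star (uA X)" "uC (ustar X) = cnj (uC X)"
  by (simp_all add: emb_def cc_def ustar_def)

lemma sum_uA: "uA (sum f S) = sum (\<lambda>i. uA (f i)) S"
  by (induction S rule: infinite_finite_induct) auto
lemma sum_uC: "uC (sum f S) = sum (\<lambda>i. uC (f i)) S"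
  by (induction S rule: infinite_finite_induct) auto

lemma emb_add: "emb (x + y) = emb x + emb y" by (rule ua_eqI) auto
lemma emb_mult: "emb (x * y) = emb x * emb y" by (rule ua_eqI) auto
lemma cc_add: "cc (c + d) = cc c + cc d" by (rule ua_eqI) auto
lemma cc_mult: "cc (c * d) = cc c * cc d" by (rule ua_eqI) auto
lemma cc_one [simp]: "cc 1 = 1" by (rule ua_eqI) auto
lemma cc_zero [simp]: "cc 0 = 0" by (rule ua_eqI) auto
lemma cc_sum: "cc (sum f S) = sum (\<lambda>i. cc (f i)) S"
  by (induction S rule: infinite_finite_induct) (auto simp: cc_add)
lemma cc_emb: "cc c * emb x = emb (scaleC c x)" by (rule ua_eqI) auto

lemma ustar_add: "ustar (X + Y) = ustar X + ustar Y" by (rule ua_eqI) (auto simp: star_add)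
lemma ustar_mult: "ustar (X * Y) = ustar X * ustar Y"
  by (rule ua_eqI) (auto simp: star_add star_mult_comm star_scaleC)
lemma ustar_one [simp]: "ustar 1 = 1" by (rule ua_eqI) auto
lemma ustar_zero [simp]: "ustar 0 = 0" by (rule ua_eqI) auto
lemma act_zero [simp]: "act 0 z = 0" by (simp add: act_def)
lemma ustar_cc: "ustar (cc c) = cc (cnj c)" by (rule ua_eqI) auto
lemma ustar_emb: "ustar (emb x) = emb (star x)" by (rule ua_eqI) auto
lemma ustar_ustar [simp]: "ustar (ustar X) = X" by (rule ua_eqI) (auto simp: star_star)
lemma ustar_power: "ustar (X ^ n) = (ustar X) ^ n"
  by (induction n) (auto simp: ustar_mult)
lemma ustar_sum: "ustar (sum f S) = sum (\<lambda>i. ustar (f i)) S"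
  by (induction S rule: infinite_finite_induct) (auto simp: ustar_add)
lemma ustar_prod: "ustar (prod f S) = prod (\<lambda>i. ustar (f i)) S"
  by (induction S rule: infinite_finite_induct) (auto simp: ustar_mult)

lemma uC_mult_emb [simp]: "uC (X * emb z) = 0" by simp

lemma act_emb: "emb (act X z) = X * emb z"
  unfolding act_def by (rule ua_eqI) auto

lemma act_add: "act (X + Y) z = act X z + act Y z"
  unfolding act_def by (simp add: distrib_right)
lemma act_sum: "act (sum f S) z = sum (\<lambda>i. act (f i) z) S"
  by (induction S rule: infinite_finite_induct) (auto simp: act_add)
lemma act_cc: "act (cc c * X) z = scaleC c (act X z)"
  unfolding act_def by (simp add: mult.assoc)

lemma act_unitary:
  assumes "ustar W * W = 1"
  shows "norm (act W z) = norm z"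
proof -
  let ?y = "act W z"
  have "emb (star ?y * ?y) = ustar (emb ?y) * emb ?y" by (simp add: emb_mult ustar_emb)
  also have "\<dots> = ustar W * W * (ustar (emb z) * emb z)"
    by (simp add: act_emb ustar_mult algebra_simps)
  also have "\<dots> = emb (star z * z)" using assms by (simp add: emb_mult ustar_emb)
  finally have "star ?y * ?y = star z * z" by (metis emb_simps(1))
  then have "(norm ?y)\<^sup>2 = (norm z)\<^sup>2" by (metis cstar_identity)
  then show ?thesis by simp
qed




fun npow :: "'a::comm_cstar_algebra \<Rightarrow> nat \<Rightarrow> 'a" where
  "npow x 0 = x"
| "npow x (Suc n) = x * npow x n"

lemma emb_npow: "emb (npow x n) = (emb x) ^ Suc n"
  by (induction n) (auto simp: emb_mult)

lemma norm_npow: "norm (npow x n) \<le> norm x ^ Suc n"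
proof (induction n)
  case (Suc n)
  have "norm (x * npow x n) \<le> norm x * norm (npow x n)" by (rule norm_mult_ineq)
  also have "\<dots> \<le> norm x * norm x ^ Suc n" using Suc by (simp add: mult_left_mono)
  finally show ?case by simp
qed simp

lemma star_npow: "star (npow x n) = npow (star x) n"
  by (induction n) (auto simp: star_mult_comm)

lemma npow_scaleR: "npow x n = npow x n" ..

section \<open>Binomial square root\<close>

definition bb :: "nat \<Rightarrow> real" where "bb n = (1/2::real) gchoose n"

lemma bb_0 [simp]: "bb 0 = 1" by (simp add: bb_def)
lemma bb_1 [simp]: "bb (Suc 0) = 1/2" by (simp add: bb_def)

lemma bb_rec: "bb (Suc k) = (1/2 - real k) / real (Suc k) * bb k"
proof -
  have "(1/2::real) * ((1/2) gchoose k) = of_nat k * ((1/2) gchoose k) + of_nat (Suc k) * ((1/2) gchoose (Suc k))"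
    by (rule gbinomial_mult_1)
  then show ?thesis unfolding bb_def by (simp add: field_simps del: of_nat_Suc)
qed

lemma bb_bound: "\<bar>bb n\<bar> \<le> 1"
proof (induction n)
  case (Suc k)
  have "\<bar>(1/2 - real k) / real (Suc k)\<bar> \<le> 1" by (simp add: abs_le_iff field_simps)
  then have "\<bar>(1/2 - real k) / real (Suc k) * bb k\<bar> \<le> 1 * 1"
    unfolding abs_mult using Suc by (intro mult_mono) auto
  then show ?case by (simp add: bb_rec)
qed simp

lemma bb_vandermonde:
  "2 * bb (Suc (Suc j)) + (\<Sum>i\<le>j. bb (Suc i) * bb (Suc j - i)) = 0"
proof -
  let ?f = "\<lambda>k. bb k * bb (Suc (Suc j) - k)"
  have V: "sum ?f {0..Suc (Suc j)} = (1::real) gchoose (Suc (Suc j))"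
    using gbinomial_Vandermonde[of "1/2::real" "1/2" "Suc (Suc j)"] by (simp add: bb_def)
  have "(1::real) gchoose (Suc (Suc j)) = of_nat (1 choose (Suc (Suc j)))"
    by (metis binomial_gbinomial of_nat_1)
  then have V0: "sum ?f {0..Suc (Suc j)} = 0" using V by simp
  have "sum ?f {0..Suc (Suc j)} = sum ?f {0..Suc j} + ?f (Suc (Suc j))"
    by (simp add: sum.atLeast0_atMost_Suc)
  also have "sum ?f {0..Suc j} = ?f 0 + sum ?f {Suc 0..Suc j}"
    by (simp add: sum.atLeast_Suc_atMost)
  also have "sum ?f {Suc 0..Suc j} = (\<Sum>i\<le>j. bb (Suc i) * bb (Suc j - i))"
    by (subst sum.shift_bounds_cl_Suc_ivl) (simp add: atMost_atLeast0)
  finally show ?thesis using V0 by simp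
qed

definition sqv :: "'a::comm_cstar_algebra \<Rightarrow> 'a" where
  "sqv w = (\<Sum>k. bb (Suc k) *\<^sub>R npow (- (w * w)) k)"

lemma sqv_props:
  fixes w :: "'a::comm_cstar_algebra"
  assumes "norm w < 1"
  shows "2 *\<^sub>R sqv w + sqv w * sqv w = - (w * w)"
    and "star w = w \<Longrightarrow> star (sqv w) = sqv w"
proof -
  define X where "X = - (w * w)"
  define a where "a k = bb (Suc k) *\<^sub>R npow X k" for k
  have nX: "norm X < 1"
  proof -
    have "norm X \<le> norm w * norm w" unfolding X_def norm_minus_cancel by (rule norm_mult_ineq)
    also have "\<dots> < 1" using assms mult_strict_mono[of "norm w" 1 "norm w" 1] by simp
    finally show ?thesis .
  qed
  have na: "norm (a k) \<le> norm X ^ Suc k" for k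
  proof -
    have "norm (a k) = \<bar>bb (Suc k)\<bar> * norm (npow X k)" by (simp add: a_def)
    also have "\<dots> \<le> 1 * norm X ^ Suc k"
      using bb_bound norm_npow by (intro mult_mono) auto
    finally show ?thesis by simp
  qed
  have sna: "summable (\<lambda>k. norm (a k))"
    by (rule summable_comparison_test[where g="\<lambda>k. norm X ^ Suc k"])
       (use na nX in \<open>auto intro!: summable_mult simp: summable_geometric_iff\<close>)
  have sa: "summable a" using sna by (rule summable_norm_cancel)
  have v: "sqv w = suminf a" by (simp add: sqv_def a_def[abs_def] X_def)
  have C: "(\<lambda>k. \<Sum>i\<le>k. a i * a (k - i)) sums (suminf a * suminf a)"
    by (rule Cauchy_product_sums[OF sna sna])
  have Ck: "(\<Sum>i\<le>k. a i * a (k - i)) = (\<Sum>i\<le>k. bb (Suc i) * bb (Suc k - i)) *\<^sub>R npow X (Suc k)" for k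
  proof -
    have "a i * a (k - i) = (bb (Suc i) * bb (Suc k - i)) *\<^sub>R npow X (Suc k)" if "i \<le> k" for i
    proof -
      have e: "npow X i * npow X (k - i) = npow X (Suc k)"
      proof -
        have "emb (npow X i * npow X (k - i)) = (emb X)^(Suc i + Suc (k - i))"
          by (simp only: emb_mult emb_npow power_add)
        also have "Suc i + Suc (k - i) = Suc (Suc k)" using that by simp
        finally have "emb (npow X i * npow X (k - i)) = emb (npow X (Suc k))"
          by (simp only: emb_npow)
        then show ?thesis by (metis emb_simps(1))
      qed
      have "a i * a (k - i) = (bb (Suc i) * bb (Suc (k - i))) *\<^sub>R (npow X i * npow X (k - i))"
        by (simp add: a_def)
      also have "Suc (k - i) = Suc k - i" using that by simp
      finally show ?thesis using e by simp
    qed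
    then show ?thesis by (simp add: scaleR_sum_left)
  qed
  define c where "c k = (if k = 0 then 0 else (\<Sum>i\<le>k - 1. a i * a (k - 1 - i)))" for k
  have Cs: "c sums (suminf a * suminf a)"
    using C sums_Suc_iff[of c "suminf a * suminf a"] by (simp add: c_def)
  have T: "(\<lambda>k. 2 *\<^sub>R a k + c k) sums (2 *\<^sub>R suminf a + suminf a * suminf a)"
    by (intro sums_add sums_scaleR_right summable_sums sa Cs)
  have t: "2 *\<^sub>R a k + c k = (if k = 0 then X else 0)" for k
  proof (cases k)
    case 0 then show ?thesis by (simp add: a_def c_def)
  next
    case (Suc j)
    have "2 *\<^sub>R a k + c k = (2 * bb (Suc (Suc j)) + (\<Sum>i\<le>j. bb (Suc i) * bb (Suc j - i))) *\<^sub>R npow X (Suc j)"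
      using Ck[of j] by (simp add: Suc a_def c_def scaleR_add_left)
    also have "\<dots> = 0" by (simp add: bb_vandermonde)
    finally show ?thesis using Suc by simp
  qed
  have "(\<lambda>k. if k = 0 then X else 0) sums X"
    using sums_single[of 0 "\<lambda>_. X"] by simp
  then have "X = 2 *\<^sub>R suminf a + suminf a * suminf a"
    using T unfolding t by (rule sums_unique2)
  then show "2 *\<^sub>R sqv w + sqv w * sqv w = - (w * w)" by (simp add: v X_def)
  assume sw: "star w = w"
  have sX: "star X = X" by (simp add: X_def star_minus star_mult_comm sw)
  have "star (suminf a) = (\<Sum>k. star (a k))"
    by (rule bounded_linear.suminf[OF bounded_linear_star sa])
  also have "\<dots> = suminf a"
    by (simp add: a_def[abs_def] star_scaleR star_npow sX)
  finally show "star (sqv w) = sqv w" by (simp add: v)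
qed

definition uu :: "'a::comm_cstar_algebra \<Rightarrow> 'a ua" where
  "uu w = UA (w + scaleC \<i> (sqv w)) \<i>"

lemma uu_props:
  fixes w :: "'a::comm_cstar_algebra"
  assumes "norm w < 1" "star w = w"
  shows "ustar (uu w) * uu w = 1"
    and "cc (1/2) * (uu w + ustar (uu w)) = emb w"
proof -
  let ?v = "sqv w"
  have sv: "star ?v = ?v" using sqv_props(2)[OF assms(1)] assms(2) .
  have id: "2 *\<^sub>R ?v + ?v * ?v = - (w * w)" using sqv_props(1)[OF assms(1)] .
  have ii: "scaleC \<i> (scaleC \<i> x) = - x" for x :: 'a
    using scaleC_minus_left[of 1 x] by (simp add: scaleC_scaleC scaleC_one)
  have ii2: "scaleC (- \<i>) (scaleC \<i> x) = x" for x :: 'a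
    by (simp add: scaleC_scaleC scaleC_one)
  have two: "2 *\<^sub>R x = x + x" for x :: 'a by (simp add: scaleR_2)
  have sstar: "star (scaleC \<i> ?v) = scaleC (- \<i>) ?v" by (simp add: star_scaleC sv)
  have "uA (ustar (uu w) * uu w) = w * w + ?v * ?v + (?v + ?v)"
    by (simp add: scaleC_one ii ii2 uu_def assms(2) sstar star_add algebra_simps scaleC_add_right scaleC_diff_right scaleC_mult_left
        scaleC_mult_right scaleC_minus_left scaleC_minus_right scaleC_scaleC)
  also have "\<dots> = 0" using id by (simp add: two algebra_simps)
  finally show "ustar (uu w) * uu w = 1"
    by (intro ua_eqI) (simp_all add: uu_def)
  have "scaleC (1/2) (2 *\<^sub>R w) = scaleC (1/2) (scaleC 2 w)" using scaleC_real[of 2 w] by simp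
  also have "\<dots> = w" by (simp add: scaleC_scaleC scaleC_one)
  finally have half: "scaleC (1/2) (2 *\<^sub>R w) = w" .
  show "cc (1/2) * (uu w + ustar (uu w)) = emb w"
    by (rule ua_eqI) (use half in \<open>simp_all add: uu_def sstar assms(2) star_add scaleC_add_right scaleC_minus_left
        flip: scaleR_2\<close>)
qed




definition upowi :: "'a::comm_cstar_algebra ua \<Rightarrow> int \<Rightarrow> 'a ua" where
  "upowi W n = (if 0 \<le> n then W ^ nat n else (ustar W) ^ nat (- n))"

lemma upowi_0 [simp]: "upowi W 0 = 1" by (simp add: upowi_def)
lemma upowi_1 [simp]: "upowi W 1 = W" by (simp add: upowi_def)
lemma upowi_m1 [simp]: "upowi W (-1) = ustar W" by (simp add: upowi_def)

lemma upowi_Suc: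
  assumes u: "ustar W * W = 1"
  shows "upowi W (p + 1) = W * upowi W p"
proof (cases "0 \<le> p")
  case True
  then have "nat (p + 1) = Suc (nat p)" by simp
  then show ?thesis using True by (simp add: upowi_def)
next
  case False
  then have "0 < - p" by simp
  then obtain n0 where n0: "- p = int n0" "0 < n0" by (rule pos_int_cases)
  then obtain n where "n0 = Suc n" using gr0_implies_Suc by blast
  then have n: "nat (- p) = Suc n" "nat (- (p + 1)) = n" using n0 by auto
  have "W * upowi W p = (ustar W * W) * ustar W ^ n" using False n by (simp add: upowi_def algebra_simps)
  also have "\<dots> = ustar W ^ n" using u by simp
  finally show ?thesis using False n by (cases "p = -1") (auto simp: upowi_def)
qed

lemma upowi_pred:
  assumes u: "ustar W * W = 1"
  shows "upowi W (p - 1) = ustar W * upowi W p"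
proof -
  have "upowi W p = W * upowi W (p - 1)" using upowi_Suc[OF u, of "p - 1"] by simp
  then have "ustar W * upowi W p = (ustar W * W) * upowi W (p - 1)" by (simp add: mult.assoc)
  then show ?thesis using u by simp
qed

lemma upowi_add:
  assumes u: "ustar W * W = 1"
  shows "upowi W (p + q) = upowi W p * upowi W q"
proof (induction q rule: int_induct[where k=0])
  case base then show ?case by simp
next
  case (step1 i)
  have "upowi W (p + (i + 1)) = W * upowi W (p + i)" using upowi_Suc[OF u, of "p + i"] by (simp add: add.assoc)
  also have "\<dots> = upowi W p * (W * upowi W i)" using step1 by (simp add: algebra_simps)
  also have "W * upowi W i = upowi W (i + 1)" using upowi_Suc[OF u] by simp
  finally show ?case .
next
  case (step2 i)
  have "upowi W (p + (i - 1)) = ustar W * upowi W (p + i)" using upowi_pred[OF u, of "p + i"] by (simp add: algebra_simps)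
  also have "\<dots> = upowi W p * (ustar W * upowi W i)" using step2 by (simp add: algebra_simps)
  also have "ustar W * upowi W i = upowi W (i - 1)" using upowi_pred[OF u] by simp
  finally show ?case .
qed

lemma ustar_upowi: "ustar (upowi W p) = upowi W (- p)"
  by (auto simp: upowi_def ustar_power)

lemma upowi_unitary:
  assumes u: "ustar W * W = 1"
  shows "ustar (upowi W p) * upowi W p = 1"
  using upowi_add[OF u, of "-p" p] by (simp add: ustar_upowi)

definition umono :: "(nat \<Rightarrow> 'a::comm_cstar_algebra ua) \<Rightarrow> nat \<Rightarrow> (nat \<Rightarrow> int) \<Rightarrow> 'a ua" where
  "umono u m k = (\<Prod>j<m. upowi (u j) (k j))"

definition unitaries :: "(nat \<Rightarrow> 'a::comm_cstar_algebra ua) \<Rightarrow> nat \<Rightarrow> bool" where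
  "unitaries u m \<longleftrightarrow> (\<forall>j<m. ustar (u j) * u j = 1)"

lemma mono_add:
  assumes "unitaries u m"
  shows "umono u m (\<lambda>j. k j + l j) = umono u m k * umono u m l"
  unfolding umono_def using assms
  by (simp add: unitaries_def upowi_add prod.distrib[symmetric])

lemma mono_unitary:
  assumes "unitaries u m"
  shows "ustar (umono u m k) * umono u m k = 1"
  unfolding umono_def using assms
  by (simp add: unitaries_def ustar_prod upowi_unitary prod.distrib[symmetric])

lemma mono_zero [simp]: "umono u m (\<lambda>_. 0) = 1"
  by (simp add: umono_def)

definition delta :: "nat \<Rightarrow> nat \<Rightarrow> int" where "delta i = (\<lambda>j. if j = i then 1 else 0)"

lemma mono_delta: "i < m \<Longrightarrow> umono u m (delta i) = u i"
proof -
  assume i: "i < m"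
  have "umono u m (delta i) = (\<Prod>j<m. if j = i then u i else 1)"
    unfolding umono_def delta_def by (intro prod.cong) auto
  also have "\<dots> = u i" using i by (simp add: prod.delta)
  finally show ?thesis .
qed

lemma mono_mdelta: "i < m \<Longrightarrow> umono u m (\<lambda>j. - delta i j) = ustar (u i)"
proof -
  assume i: "i < m"
  have "umono u m (\<lambda>j. - delta i j) = (\<Prod>j<m. if j = i then ustar (u i) else 1)"
    unfolding umono_def delta_def by (intro prod.cong) auto
  also have "\<dots> = ustar (u i)" using i by (simp add: prod.delta)
  finally show ?thesis .
qed

section \<open>Characters of the torus\<close>

definition echar :: "nat \<Rightarrow> (nat \<Rightarrow> int) \<Rightarrow> (nat \<Rightarrow> real) \<Rightarrow> complex" where
  "echar m k t = exp (\<i> * complex_of_real (\<Sum>j<m. real_of_int (k j) * t j))"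

lemma echar_add: "echar m (\<lambda>j. k j + l j) t = echar m k t * echar m l t"
  by (simp add: echar_def sum.distrib distrib_right distrib_left flip: exp_add)

lemma echar_zero [simp]: "echar m (\<lambda>_. 0) t = 1"
  by (simp add: echar_def)

lemma echar_cnj: "cnj (echar m k t) = echar m (\<lambda>j. - k j) t"
  by (simp add: echar_def exp_cnj sum_negf)

lemma norm_echar [simp]: "norm (echar m k t) = 1"
  by (simp add: echar_def)

lemma echar_delta:
  assumes "i < m" shows "echar m (delta i) t = exp (\<i> * complex_of_real (t i))"
proof -
  have "(\<Sum>j<m. real_of_int (delta i j) * t j) = (\<Sum>j<m. if j = i then t j else 0)"
    by (rule sum.cong) (auto simp: delta_def)
  also have "\<dots> = t i" using assms by (simp add: sum.delta)
  finally show ?thesis by (simp add: echar_def)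
qed

lemma echar_mdelta:
  assumes "i < m" shows "echar m (\<lambda>j. - delta i j) t = exp (- (\<i> * complex_of_real (t i)))"
proof -
  have "(\<Sum>j<m. real_of_int (- delta i j) * t j) = (\<Sum>j<m. if j = i then - t j else 0)"
    by (rule sum.cong) (auto simp: delta_def)
  also have "\<dots> = - t i" using assms by (simp add: sum.delta)
  finally show ?thesis by (simp add: echar_def)
qed

definition Kset :: "nat \<Rightarrow> nat \<Rightarrow> (nat \<Rightarrow> int) set" where
  "Kset m d = {k. (\<forall>j<m. \<bar>k j\<bar> \<le> int d) \<and> (\<forall>j. m \<le> j \<longrightarrow> k j = 0)}"

lemma Kset_iff: "k \<in> Kset m d \<longleftrightarrow> (\<forall>j<m. \<bar>k j\<bar> \<le> int d) \<and> (\<forall>j. m \<le> j \<longrightarrow> k j = 0)"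
  unfolding Kset_def by simp

lemma finite_Kset: "finite (Kset m d)"
proof (rule finite_subset)
  show "Kset m d \<subseteq> {k. \<forall>j. (j \<in> {..<m} \<longrightarrow> k j \<in> {- int d..int d}) \<and> (j \<notin> {..<m} \<longrightarrow> k j = 0)}"
  proof (intro subsetI CollectI allI conjI impI)
    fix k j assume k: "k \<in> Kset m d"
    { assume "j \<in> {..<m}" then have "\<bar>k j\<bar> \<le> int d" using k by (auto simp: Kset_iff)
      then show "k j \<in> {- int d..int d}" by (simp add: abs_le_iff) }
    { assume "j \<notin> {..<m}" then show "k j = 0" using k by (auto simp: Kset_iff) }
  qed
  show "finite {k. \<forall>j. (j \<in> {..<m} \<longrightarrow> k j \<in> {- int d..int d}) \<and> (j \<notin> {..<m} \<longrightarrow> k j = 0)}"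
    by (rule finite_set_of_finite_funs) auto
qed

lemma Kset_mono: "d \<le> d' \<Longrightarrow> Kset m d \<subseteq> Kset m d'"
  by (force simp: Kset_iff)

lemma Kset_add:
  assumes "k \<in> Kset m d1" "l \<in> Kset m d2"
  shows "(\<lambda>j. k j + l j) \<in> Kset m (d1 + d2)"
  unfolding Kset_iff
proof (intro conjI allI impI)
  fix j assume "j < m"
  then have "\<bar>k j\<bar> \<le> int d1" "\<bar>l j\<bar> \<le> int d2" using assms by (auto simp: Kset_iff)
  then show "\<bar>k j + l j\<bar> \<le> int (d1 + d2)" using abs_triangle_ineq[of "k j" "l j"] by simp
next
  fix j assume "m \<le> j" then show "k j + l j = 0" using assms by (auto simp: Kset_iff)
qed

lemma Kset_zero: "(\<lambda>_. 0) \<in> Kset m d" by (simp add: Kset_iff)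

lemma Kset_delta: "i < m \<Longrightarrow> 1 \<le> d \<Longrightarrow> delta i \<in> Kset m d"
  by (auto simp: Kset_iff delta_def)

lemma Kset_mdelta: "i < m \<Longrightarrow> 1 \<le> d \<Longrightarrow> (\<lambda>j. - delta i j) \<in> Kset m d"
  by (auto simp: Kset_iff delta_def)

lemma card_Kset: "card (Kset m d) \<le> (2 * d + 1) ^ m"
proof -
  let ?P = "PiE {..<m} (\<lambda>_. {- int d..int d})"
  let ?f = "\<lambda>f j. if j < m then f j else (0::int)"
  have "Kset m d \<subseteq> ?f ` ?P"
  proof
    fix k assume k: "k \<in> Kset m d"
    have "restrict k {..<m} \<in> ?P" using k by (auto simp: Kset_iff abs_le_iff)
    moreover have "k = ?f (restrict k {..<m})" using k by (auto simp: Kset_iff)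
    ultimately show "k \<in> ?f ` ?P" by blast
  qed
  have fP: "finite ?P" by (intro finite_PiE) auto
  from \<open>Kset m d \<subseteq> ?f ` ?P\<close> have "card (Kset m d) \<le> card (?f ` ?P)" by (intro card_mono finite_imageI finite_PiE) auto
  also have "\<dots> \<le> card ?P" by (rule card_image_le[OF fP])
  also have "card ?P = (2 * d + 1) ^ m"
  proof -
    have "nat (2 * int d + 1) = Suc (2 * d)" by simp
    then show ?thesis by (simp add: card_PiE)
  qed
  finally show ?thesis .
qed




definition LP :: "nat \<Rightarrow> (nat \<Rightarrow> 'a::comm_cstar_algebra ua) \<Rightarrow> nat \<Rightarrow> ((nat \<Rightarrow> real) \<Rightarrow> complex) \<Rightarrow> 'a ua \<Rightarrow> bool" where
  "LP m u d F X \<longleftrightarrow> (\<exists>L. (\<forall>p\<in>set L. snd p \<in> Kset m d) \<and>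
      (\<forall>t. F t = (\<Sum>p\<leftarrow>L. fst p * echar m (snd p) t)) \<and>
      X = (\<Sum>p\<leftarrow>L. cc (fst p) * umono u m (snd p)))"

lemma LP_const: "LP m u d (\<lambda>t. c) (cc c)"
  unfolding LP_def by (rule exI[of _ "[(c, \<lambda>_. 0)]"]) (simp add: Kset_zero)

lemma LP_add:
  assumes "LP m u d F X" "LP m u d G Y"
  shows "LP m u d (\<lambda>t. F t + G t) (X + Y)"
proof -
  obtain L1 where L1: "\<forall>p\<in>set L1. snd p \<in> Kset m d" "\<forall>t. F t = (\<Sum>p\<leftarrow>L1. fst p * echar m (snd p) t)"
    "X = (\<Sum>p\<leftarrow>L1. cc (fst p) * umono u m (snd p))" using assms(1) unfolding LP_def by blast
  obtain L2 where L2: "\<forall>p\<in>set L2. snd p \<in> Kset m d" "\<forall>t. G t = (\<Sum>p\<leftarrow>L2. fst p * echar m (snd p) t)"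
    "Y = (\<Sum>p\<leftarrow>L2. cc (fst p) * umono u m (snd p))" using assms(2) unfolding LP_def by blast
  show ?thesis unfolding LP_def
    by (rule exI[of _ "L1 @ L2"]) (use L1 L2 in auto)
qed

lemma LP_mono:
  assumes "LP m u d F X" "d \<le> d'"
  shows "LP m u d' F X"
  using assms Kset_mono unfolding LP_def by blast

lemma sum_list_mult_sum_list:
  fixes f g :: "'b \<Rightarrow> 'c::comm_ring"
  shows "(\<Sum>p\<leftarrow>L1. f p) * (\<Sum>q\<leftarrow>L2. g q) = (\<Sum>p\<leftarrow>L1. \<Sum>q\<leftarrow>L2. f p * g q)"
  by (induction L1) (auto simp: distrib_right sum_list_const_mult)

lemma sum_list_concat': "sum_list (concat xs) = sum_list (map sum_list xs)"
  by (induction xs) auto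

lemma LP_mult:
  assumes "LP m u d1 F X" "LP m u d2 G Y" "unitaries u m"
  shows "LP m u (d1 + d2) (\<lambda>t. F t * G t) (X * Y)"
proof -
  obtain L1 where L1: "\<forall>p\<in>set L1. snd p \<in> Kset m d1" "\<forall>t. F t = (\<Sum>p\<leftarrow>L1. fst p * echar m (snd p) t)"
    "X = (\<Sum>p\<leftarrow>L1. cc (fst p) * umono u m (snd p))" using assms(1) unfolding LP_def by blast
  obtain L2 where L2: "\<forall>p\<in>set L2. snd p \<in> Kset m d2" "\<forall>t. G t = (\<Sum>p\<leftarrow>L2. fst p * echar m (snd p) t)"
    "Y = (\<Sum>p\<leftarrow>L2. cc (fst p) * umono u m (snd p))" using assms(2) unfolding LP_def by blast
  let ?L = "concat (map (\<lambda>p. map (\<lambda>q. (fst p * fst q, \<lambda>j. snd p j + snd q j)) L2) L1)"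
  have s: "(\<Sum>r\<leftarrow>?L. f r) = (\<Sum>p\<leftarrow>L1. \<Sum>q\<leftarrow>L2. f (fst p * fst q, \<lambda>j. snd p j + snd q j))"
    for f :: "complex \<times> (nat \<Rightarrow> int) \<Rightarrow> 'b::comm_monoid_add"
    by (simp add: sum_list_concat' map_concat comp_def)
  show ?thesis unfolding LP_def
  proof (intro exI[of _ ?L] conjI allI)
    show "\<forall>p\<in>set ?L. snd p \<in> Kset m (d1 + d2)" using L1(1) L2(1) by (auto intro: Kset_add)
    fix t
    show "F t * G t = (\<Sum>p\<leftarrow>?L. fst p * echar m (snd p) t)"
      unfolding s using L1(2) L2(2) by (simp add: sum_list_mult_sum_list echar_add algebra_simps)
  next
    show "X * Y = (\<Sum>p\<leftarrow>?L. cc (fst p) * umono u m (snd p))"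
      unfolding s using L1(3) L2(3) assms(3)
      by (simp add: sum_list_mult_sum_list mono_add cc_mult algebra_simps)
  qed
qed

lemma LP_var:
  assumes "i < m" "1 \<le> d"
  shows "LP m u d (\<lambda>t. complex_of_real (cos (t i))) (cc (1/2) * (u i + ustar (u i)))"
  unfolding LP_def
proof (intro exI[of _ "[(1/2, delta i), (1/2, \<lambda>j. - delta i j)]"] conjI allI)
  show "\<forall>p\<in>set [(1/2, delta i), (1/2, \<lambda>j. - delta i j)]. snd p \<in> Kset m d"
    using assms by (auto intro: Kset_delta Kset_mdelta)
  fix t
  show "complex_of_real (cos (t i)) = (\<Sum>p\<leftarrow>[(1/2, delta i), (1/2, \<lambda>j. - delta i j)]. fst p * echar m (snd p) t)"
    using assms by (simp add: echar_delta echar_mdelta cos_exp_eq cos_of_real[symmetric] field_simps)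
next
  show "cc (1/2) * (u i + ustar (u i)) = (\<Sum>p\<leftarrow>[(1/2, delta i), (1/2, \<lambda>j. - delta i j)]. cc (fst p) * umono u m (snd p))"
    using assms by (simp add: mono_delta mono_mdelta distrib_left)
qed

datatype pexp = Var nat | Cst real | Add pexp pexp | Mul pexp pexp

fun evalR :: "(nat \<Rightarrow> real) \<Rightarrow> pexp \<Rightarrow> real" where
  "evalR r (Var i) = r i"
| "evalR r (Cst c) = c"
| "evalR r (Add e1 e2) = evalR r e1 + evalR r e2"
| "evalR r (Mul e1 e2) = evalR r e1 * evalR r e2"

fun evalU :: "(nat \<Rightarrow> 'a::comm_cstar_algebra ua) \<Rightarrow> pexp \<Rightarrow> 'a ua" where
  "evalU r (Var i) = r i"
| "evalU r (Cst c) = cc (complex_of_real c)"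
| "evalU r (Add e1 e2) = evalU r e1 + evalU r e2"
| "evalU r (Mul e1 e2) = evalU r e1 * evalU r e2"

fun deg :: "pexp \<Rightarrow> nat" where
  "deg (Var i) = 1"
| "deg (Cst c) = 0"
| "deg (Add e1 e2) = max (deg e1) (deg e2)"
| "deg (Mul e1 e2) = deg e1 + deg e2"

fun vb :: "nat \<Rightarrow> pexp \<Rightarrow> bool" where
  "vb m (Var i) = (i < m)"
| "vb m (Cst c) = True"
| "vb m (Add e1 e2) = (vb m e1 \<and> vb m e2)"
| "vb m (Mul e1 e2) = (vb m e1 \<and> vb m e2)"

lemma LP_eval:
  assumes "vb m e" "unitaries u m"
  shows "LP m u (deg e) (\<lambda>t. complex_of_real (evalR (\<lambda>j. cos (t j)) e))
            (evalU (\<lambda>j. cc (1/2) * (u j + ustar (u j))) e)"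
  using assms(1)
proof (induction e)
  case (Var i) then show ?case using LP_var[of i m 1 u] by simp
next
  case (Cst c) then show ?case using LP_const[of m u 0 "complex_of_real c"] by simp
next
  case (Add e1 e2)
  then have "LP m u (max (deg e1) (deg e2)) (\<lambda>t. complex_of_real (evalR (\<lambda>j. cos (t j)) e1))
            (evalU (\<lambda>j. cc (1/2) * (u j + ustar (u j))) e1)"
       "LP m u (max (deg e1) (deg e2)) (\<lambda>t. complex_of_real (evalR (\<lambda>j. cos (t j)) e2))
            (evalU (\<lambda>j. cc (1/2) * (u j + ustar (u j))) e2)"
    by (auto intro: LP_mono)
  from LP_add[OF this] show ?case by simp
next
  case (Mul e1 e2)
  then show ?case using LP_mult[OF _ _ assms(2)] by simp
qed




lemma digits_zero:
  fixes a :: "nat \<Rightarrow> int" and B :: int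
  assumes "0 < B" "\<forall>j<m. \<bar>a j\<bar> < B" "(\<Sum>j<m. a j * B ^ j) = 0"
  shows "\<forall>j<m. a j = 0"
  using assms(2,3)
proof (induction m arbitrary: a)
  case 0 then show ?case by simp
next
  case (Suc m)
  define S where "S = (\<Sum>j<m. a (Suc j) * B ^ j)"
  have eq: "(\<Sum>j<Suc m. a j * B ^ j) = a 0 + B * S"
    unfolding S_def by (subst sum.lessThan_Suc_shift) (simp add: sum_distrib_left algebra_simps)
  have a0: "a 0 = - (B * S)" using Suc.prems(2) eq by simp
  have "S = 0"
  proof (rule ccontr)
    assume "S \<noteq> 0"
    then have "1 \<le> \<bar>S\<bar>" by simp
    then have "B \<le> \<bar>B * S\<bar>" using assms(1) by (simp add: abs_mult)
    moreover have "\<bar>a 0\<bar> < B" using Suc.prems(1) by simp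
    ultimately show False using a0 by simp
  qed
  then have "a 0 = 0" using a0 by simp
  have "\<forall>j<m. a (Suc j) = 0"
    using Suc.IH[of "\<lambda>j. a (Suc j)"] Suc.prems(1) \<open>S = 0\<close> unfolding S_def by simp
  then show ?case using \<open>a 0 = 0\<close> by (auto simp: less_Suc_eq_0_disj)
qed

lemma digits_bound:
  fixes a :: "nat \<Rightarrow> int" and B :: int
  assumes "0 < B" "\<forall>j<m. \<bar>a j\<bar> \<le> B - 1"
  shows "\<bar>\<Sum>j<m. a j * B ^ j\<bar> \<le> B ^ m - 1"
  using assms(2)
proof (induction m arbitrary: a)
  case 0 then show ?case by simp
next
  case (Suc m)
  define S where "S = (\<Sum>j<m. a (Suc j) * B ^ j)"
  have eq: "(\<Sum>j<Suc m. a j * B ^ j) = a 0 + B * S"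
    unfolding S_def by (subst sum.lessThan_Suc_shift) (simp add: sum_distrib_left algebra_simps)
  have S: "\<bar>S\<bar> \<le> B ^ m - 1" using Suc.IH[of "\<lambda>j. a (Suc j)"] Suc.prems unfolding S_def by simp
  have "\<bar>a 0 + B * S\<bar> \<le> \<bar>a 0\<bar> + B * \<bar>S\<bar>" using abs_triangle_ineq[of "a 0" "B * S"] assms(1) by (simp add: abs_mult)
  also have "\<dots> \<le> (B - 1) + B * (B ^ m - 1)"
    using Suc.prems S assms(1) by (intro add_mono mult_left_mono) auto
  also have "\<dots> = B ^ Suc m - 1" by (simp add: algebra_simps)
  finally show ?case using eq by simp
qed

lemma roots_sum:
  fixes n :: int and M :: nat
  assumes "0 < M" "n \<noteq> 0" "\<bar>n\<bar> < int M"
  shows "(\<Sum>s<M. exp (\<i> * complex_of_real (2 * pi * real s * real_of_int n / real M))) = 0"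
proof -
  define x where "x = \<i> * complex_of_real (2 * pi * real_of_int n / real M)"
  define w where "w = exp x"
  have tm: "exp (\<i> * complex_of_real (2 * pi * real s * real_of_int n / real M)) = w ^ s" for s
  proof -
    have "\<i> * complex_of_real (2 * pi * real s * real_of_int n / real M) = of_nat s * x"
      unfolding x_def by simp
    then show ?thesis unfolding w_def by (simp add: exp_of_nat_mult)
  qed
  have wM: "w ^ M = 1"
  proof -
    have "w ^ M = exp (of_nat M * x)" unfolding w_def by (simp add: exp_of_nat_mult)
    also have "of_nat M * x = \<i> * complex_of_real (2 * pi * real_of_int n)"
      unfolding x_def using assms(1) by simp
    also have "exp \<dots> = 1" unfolding exp_eq_1 by (auto intro!: exI[of _ n])
    finally show ?thesis .
  qed
  have w1: "w \<noteq> 1"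
  proof
    assume "w = 1"
    then obtain k :: int where k: "2 * pi * real_of_int n / real M = of_int (2 * k) * pi"
      unfolding w_def exp_eq_1 x_def by auto
    then have "real_of_int n = real_of_int k * real M" using assms(1) by (simp add: field_simps)
    then have nk: "n = k * int M" by (metis of_int_eq_iff of_int_mult of_int_of_nat_eq)
    show False
    proof (cases "k = 0")
      case True then show False using nk assms(2) by simp
    next
      case False
      then have "1 \<le> \<bar>k\<bar>" by simp
      then have "int M \<le> \<bar>k\<bar> * int M" using mult_right_mono[of 1 "\<bar>k\<bar>" "int M"] by simp
      then show False using nk assms(3) by (simp add: abs_mult)
    qed
  qed
  have "(\<Sum>s<M. exp (\<i> * complex_of_real (2 * pi * real s * real_of_int n / real M))) = (\<Sum>s<M. w ^ s)"
    by (intro sum.cong refl tm)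
  also have "\<dots> = 0" using w1 wM by (simp add: sum_gp_strict)
  finally show ?thesis .
qed

section \<open>Orthogonality on a sampled line\<close>

definition tt :: "nat \<Rightarrow> nat \<Rightarrow> nat \<Rightarrow> nat \<Rightarrow> real" where
  "tt m d s j = 2 * pi * real s * real ((2 * d + 1) ^ j) / real ((2 * d + 1) ^ m)"

lemma echar_tt:
  "echar m q (tt m d s) = exp (\<i> * complex_of_real (2 * pi * real s *
      real_of_int (\<Sum>j<m. q j * int (2 * d + 1) ^ j) / real ((2 * d + 1) ^ m)))"
proof -
  have "(\<Sum>j<m. real_of_int (q j) * tt m d s j) =
      2 * pi * real s * real_of_int (\<Sum>j<m. q j * int (2 * d + 1) ^ j) / real ((2 * d + 1) ^ m)"
    by (simp add: tt_def sum_divide_distrib sum_distrib_left algebra_simps)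
  then show ?thesis by (simp add: echar_def)
qed

lemma ortho:
  assumes k: "k \<in> Kset m d" and l: "l \<in> Kset m d"
  shows "(\<Sum>s<(2 * d + 1) ^ m. echar m k (tt m d s) * cnj (echar m l (tt m d s))) =
           (if k = l then of_nat ((2 * d + 1) ^ m) else 0)"
proof -
  define M where "M = (2 * d + 1) ^ m"
  define q where "q j = k j - l j" for j
  define n where "n = (\<Sum>j<m. q j * int (2 * d + 1) ^ j)"
  have M0: "0 < M" unfolding M_def by simp
  have e: "echar m k (tt m d s) * cnj (echar m l (tt m d s)) =
      exp (\<i> * complex_of_real (2 * pi * real s * real_of_int n / real M))" for s
  proof -
    have "echar m k (tt m d s) * cnj (echar m l (tt m d s)) = echar m k (tt m d s) * echar m (\<lambda>j. - l j) (tt m d s)"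
      by (simp add: echar_cnj)
    also have "\<dots> = echar m (\<lambda>j. k j + - l j) (tt m d s)"
      by (rule echar_add[symmetric])
    also have "(\<lambda>j. k j + - l j) = q" by (auto simp: q_def)
    finally show ?thesis by (simp add: echar_tt n_def M_def)
  qed
  show ?thesis
  proof (cases "k = l")
    case True
    then have "n = 0" by (simp add: n_def q_def)
    then show ?thesis using True e by (simp add: M_def)
  next
    case False
    have qb: "\<bar>q j\<bar> \<le> int (2 * d + 1) - 1" if "j < m" for j
      using k l that unfolding Kset_iff q_def by fastforce
    have "n \<noteq> 0"
    proof
      assume "n = 0"
      then have "\<forall>j<m. q j = 0"
        using digits_zero[of "int (2 * d + 1)" m q] qb unfolding n_def by fastforce
      moreover have "\<forall>j. m \<le> j \<longrightarrow> q j = 0" using k l by (auto simp: Kset_iff q_def)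
      ultimately have "k = l" unfolding q_def by (metis eq_iff_diff_eq_0 not_le ext)
      then show False using False by simp
    qed
    moreover have "\<bar>n\<bar> < int M"
    proof -
      have "\<bar>n\<bar> \<le> int (2 * d + 1) ^ m - 1"
        unfolding n_def by (rule digits_bound) (use qb in auto)
      then show ?thesis unfolding M_def by simp
    qed
    ultimately show ?thesis using roots_sum[OF M0] False e unfolding M_def by simp
  qed
qed

section \<open>The averaging bound\<close>

lemma cc_sum_list: "cc (\<Sum>p\<leftarrow>L. f p) = (\<Sum>p\<leftarrow>L. cc (f p))"
  by (induction L) (auto simp: cc_add)

lemma LP_bound:
  fixes X :: "'a::comm_cstar_algebra ua"
  assumes LPX: "LP m u d F X" and un: "unitaries u m" and FB: "\<forall>t. norm (F t) \<le> Bd"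
  shows "norm (act X z) \<le> real (card (Kset m d)) * Bd * norm z"
proof -
  obtain L where L: "\<forall>p\<in>set L. snd p \<in> Kset m d" "\<forall>t. F t = (\<Sum>p\<leftarrow>L. fst p * echar m (snd p) t)"
    "X = (\<Sum>p\<leftarrow>L. cc (fst p) * umono u m (snd p))" using LPX unfolding LP_def by blast
  define M where "M = (2 * d + 1) ^ m"
  have M0: "0 < M" unfolding M_def by simp
  define K where "K = Kset m d"
  have fK: "finite K" unfolding K_def by (rule finite_Kset)
  define D :: "nat \<Rightarrow> 'a ua" where "D s = (\<Sum>j\<in>K. cc (cnj (echar m j (tt m d s))) * umono u m j)" for s
  have cD: "cc a * D s = (\<Sum>j\<in>K. cc (a * cnj (echar m j (tt m d s))) * umono u m j)" for a s
    unfolding D_def sum_distrib_left by (intro sum.cong refl) (simp add: cc_mult mult.assoc)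
  have single: "(\<Sum>s<M. cc (c * echar m k (tt m d s) / of_nat M) * D s) = cc c * umono u m k"
    if k: "k \<in> K" for c k
  proof -
    have "(\<Sum>s<M. cc (c * echar m k (tt m d s) / of_nat M) * D s) =
          (\<Sum>s<M. \<Sum>j\<in>K. cc (c * echar m k (tt m d s) / of_nat M * cnj (echar m j (tt m d s))) * umono u m j)"
      by (simp only: cD)
    also have "\<dots> = (\<Sum>j\<in>K. \<Sum>s<M. cc (c * echar m k (tt m d s) / of_nat M * cnj (echar m j (tt m d s))) * umono u m j)"
      by (rule sum.swap)
    also have "\<dots> = (\<Sum>j\<in>K. cc (\<Sum>s<M. c * echar m k (tt m d s) / of_nat M * cnj (echar m j (tt m d s))) * umono u m j)"
      by (simp add: sum_distrib_right cc_sum)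
    also have "\<dots> = (\<Sum>j\<in>K. cc (c / of_nat M * (\<Sum>s<M. echar m k (tt m d s) * cnj (echar m j (tt m d s)))) * umono u m j)"
    proof (intro sum.cong refl arg_cong2[where f="(*)"] arg_cong[where f=cc])
      fix j
      show "(\<Sum>s<M. c * echar m k (tt m d s) / of_nat M * cnj (echar m j (tt m d s))) =
            c / of_nat M * (\<Sum>s<M. echar m k (tt m d s) * cnj (echar m j (tt m d s)))"
        by (simp add: sum_distrib_left mult_ac)
    qed
    also have "\<dots> = (\<Sum>j\<in>K. cc (if k = j then c else 0) * umono u m j)"
    proof (intro sum.cong refl)
      fix j assume j: "j \<in> K"
      have orth: "(\<Sum>s<M. echar m k (tt m d s) * cnj (echar m j (tt m d s))) = (if k = j then of_nat M else 0)"
        using ortho[of k m d j] k j unfolding M_def K_def by blast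
      show "cc (c / of_nat M * (\<Sum>s<M. echar m k (tt m d s) * cnj (echar m j (tt m d s)))) * umono u m j =
            cc (if k = j then c else 0) * umono u m j"
        unfolding orth using M0 by simp
    qed
    also have "\<dots> = (\<Sum>j\<in>K. if k = j then cc c * umono u m j else 0)"
      by (intro sum.cong refl) auto
    also have "\<dots> = cc c * umono u m k" using k fK by (simp add: sum.delta)
    finally show ?thesis .
  qed
  have rep: "(\<Sum>s<M. cc ((\<Sum>p\<leftarrow>L'. fst p * echar m (snd p) (tt m d s)) / of_nat M) * D s) =
              (\<Sum>p\<leftarrow>L'. cc (fst p) * umono u m (snd p))"
    if "\<forall>p\<in>set L'. snd p \<in> K" for L'
    using that
  proof (induction L')
    case Nil then show ?case by simp
  next
    case (Cons p L')
    have "(\<Sum>s<M. cc ((\<Sum>p\<leftarrow>p # L'. fst p * echar m (snd p) (tt m d s)) / of_nat M) * D s) =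
          (\<Sum>s<M. cc (fst p * echar m (snd p) (tt m d s) / of_nat M) * D s) +
          (\<Sum>s<M. cc ((\<Sum>p\<leftarrow>L'. fst p * echar m (snd p) (tt m d s)) / of_nat M) * D s)"
      by (simp add: add_divide_distrib cc_add distrib_right sum.distrib)
    then show ?case using Cons single by simp
  qed
  have XD: "X = (\<Sum>s<M. cc (F (tt m d s) / of_nat M) * D s)"
    using rep[of L] L unfolding K_def by simp
  have nD: "norm (act (D s) z) \<le> real (card K) * norm z" for s
  proof -
    have "norm (act (D s) z) = norm (\<Sum>j\<in>K. scaleC (cnj (echar m j (tt m d s))) (act (umono u m j) z))"
      unfolding D_def by (simp add: act_sum act_cc)
    also have "\<dots> \<le> (\<Sum>j\<in>K. norm (scaleC (cnj (echar m j (tt m d s))) (act (umono u m j) z)))"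
      by (rule norm_sum)
    also have "\<dots> = (\<Sum>j\<in>K. norm z)"
      by (intro sum.cong refl) (simp add: norm_scaleC act_unitary[OF mono_unitary[OF un]])
    finally show ?thesis by simp
  qed
  have "norm (act X z) = norm (\<Sum>s<M. scaleC (F (tt m d s) / of_nat M) (act (D s) z))"
    unfolding XD by (simp add: act_sum act_cc)
  also have "\<dots> \<le> (\<Sum>s<M. norm (scaleC (F (tt m d s) / of_nat M) (act (D s) z)))"
    by (rule norm_sum)
  also have "\<dots> \<le> (\<Sum>s<M. Bd / real M * (real (card K) * norm z))"
  proof (intro sum_mono)
    fix s
    have "norm (F (tt m d s) / of_nat M) \<le> Bd / real M"
      using FB M0 by (simp add: norm_divide divide_right_mono)
      have "0 \<le> Bd" using FB norm_ge_zero order_trans by blast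
      then show "norm (scaleC (F (tt m d s) / of_nat M) (act (D s) z)) \<le> Bd / real M * (real (card K) * norm z)"
      using \<open>norm (F (tt m d s) / of_nat M) \<le> Bd / real M\<close>
      unfolding norm_scaleC by (intro mult_mono nD) auto
  qed
  also have "\<dots> = real (card K) * Bd * norm z" using M0 by simp
  finally show ?thesis unfolding K_def .
qed




lemma growth_bound:
  fixes a b :: real and D m :: nat
  assumes a: "0 \<le> a" and b: "0 \<le> b"
    and H: "\<And>k. a ^ (2 ^ Suc k - 1) \<le> (2 * real (2 ^ Suc k - 1) * real D + 1) ^ m * b ^ (2 ^ Suc k - 1)"
  shows "a \<le> b"
proof -
  define g where "g k = (2::nat) ^ Suc k - 1" for k
  have g1: "1 \<le> g k" for k
  proof -
    have "(1::nat) \<le> 2 ^ k" by simp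
    then show ?thesis unfolding g_def power_Suc by linarith
  qed
  have smg: "strict_mono g" unfolding strict_mono_def g_def
    by (auto intro!: diff_less_mono power_strict_increasing)
  define h where "h N = (root N (2 * real D + 1) * root N (real N)) ^ m" for N
  have hN: "a \<le> h N * b" if N1: "1 \<le> N" and aN: "a ^ N \<le> (2 * real N * real D + 1) ^ m * b ^ N" for N
  proof -
    have N0: "0 < N" using N1 by simp
    have "(2 * real N * real D + 1) ^ m \<le> ((2 * real D + 1) * real N) ^ m"
    proof (rule power_mono)
      have "1 \<le> real N" using N1 by simp
      then show "2 * real N * real D + 1 \<le> (2 * real D + 1) * real N" by (simp add: algebra_simps)
    qed simp
    then have "a ^ N \<le> ((2 * real D + 1) * real N) ^ m * b ^ N"
      using aN by (meson b mult_right_mono order_trans zero_le_power)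
    then have "root N (a ^ N) \<le> root N (((2 * real D + 1) * real N) ^ m * b ^ N)"
      by (rule real_root_le_mono[OF N0])
    also have "root N (a ^ N) = a" using N0 a by (rule real_root_power_cancel)
    also have "root N (((2 * real D + 1) * real N) ^ m * b ^ N) = h N * b"
      using N0 b by (simp add: h_def real_root_mult real_root_power real_root_power_cancel)
    finally show ?thesis .
  qed
  have lim_h: "(\<lambda>N. h N) \<longlonglongrightarrow> 1"
  proof -
    have "(\<lambda>N. root N (2 * real D + 1) * root N (real N)) \<longlonglongrightarrow> 1 * 1"
      by (intro tendsto_mult LIMSEQ_root_const LIMSEQ_root) simp
    from tendsto_power[OF this, of m] show ?thesis unfolding h_def by simp
  qed
  have "(\<lambda>k. h (g k)) \<longlonglongrightarrow> 1" using LIMSEQ_subseq_LIMSEQ[OF lim_h smg] by (simp add: comp_def)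
  from tendsto_mult[OF this tendsto_const[of b]] have L: "(\<lambda>k. h (g k) * b) \<longlonglongrightarrow> b" by simp
  show ?thesis
  proof (rule LIMSEQ_le_const[OF L])
    show "\<exists>N. \<forall>n\<ge>N. a \<le> h (g n) * b"
      using hN g1 H unfolding g_def by (auto simp del: power_Suc)
  qed
qed

fun pw :: "pexp \<Rightarrow> nat \<Rightarrow> pexp" where
  "pw e 0 = Cst 1"
| "pw e (Suc n) = Mul e (pw e n)"

lemma evalU_pw: "evalU r (pw e n) = (evalU r e) ^ n"
  by (induction n) auto
lemma evalR_pw: "evalR r (pw e n) = (evalR r e) ^ n"
  by (induction n) auto
lemma deg_pw: "deg (pw e n) = n * deg e"
  by (induction n) auto
lemma vb_pw: "vb m e \<Longrightarrow> vb m (pw e n)"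
  by (induction n) auto

lemma evalU_cong: "vb m e \<Longrightarrow> (\<And>j. j < m \<Longrightarrow> r j = r' j) \<Longrightarrow> evalU r e = evalU r' e"
  by (induction e) auto
lemma evalR_cong: "vb m e \<Longrightarrow> (\<And>j. j < m \<Longrightarrow> r j = r' j) \<Longrightarrow> evalR r e = evalR r' e"
  by (induction e) auto

lemma uC_evalU: "uC (evalU (\<lambda>j. emb (w j)) e) = complex_of_real (evalR (\<lambda>_. 0) e)"
  by (induction e) auto

lemma star_evalU:
  assumes "\<And>j. star (w j) = w j"
  shows "ustar (evalU (\<lambda>j. emb (w j)) e) = evalU (\<lambda>j. emb (w j)) e"
  by (induction e) (auto simp: ustar_add ustar_mult ustar_cc ustar_emb assms)

definition evalA :: "(nat \<Rightarrow> 'a::comm_cstar_algebra) \<Rightarrow> pexp \<Rightarrow> 'a" where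
  "evalA w e = uA (evalU (\<lambda>j. emb (w j)) e)"

lemma emb_evalA:
  assumes "evalR (\<lambda>_. 0) e = 0"
  shows "emb (evalA w e) = evalU (\<lambda>j. emb (w j)) e"
  by (rule ua_eqI) (simp_all add: evalA_def uC_evalU assms)

section \<open>The main norm estimate\<close>

theorem engine:
  fixes w :: "nat \<Rightarrow> 'a::comm_cstar_algebra"
  assumes sa: "\<And>j. star (w j) = w j" and nw: "\<And>j. j < m \<Longrightarrow> norm (w j) < 1"
    and vbe: "vb m e" and e0: "evalR (\<lambda>_. 0) e = 0"
    and bnd: "\<And>\<theta>. (\<And>j. \<bar>\<theta> j\<bar> \<le> 1) \<Longrightarrow> \<bar>evalR \<theta> e\<bar> \<le> Bd"
  shows "norm (evalA w e) \<le> Bd"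
proof -
  define u where "u j = uu (w j)" for j
  have un: "unitaries u m" unfolding unitaries_def u_def using uu_props(1)[OF nw sa] by blast
  have uw: "cc (1/2) * (u j + ustar (u j)) = emb (w j)" if "j < m" for j
    unfolding u_def using uu_props(2)[OF nw[OF that] sa] .
  define y where "y = evalA w e"
  have Ey: "emb y = evalU (\<lambda>j. emb (w j)) e" unfolding y_def by (rule emb_evalA[OF e0])
  have Bd0: "0 \<le> Bd" using bnd[of "\<lambda>_. 0"] by simp
  have sy: "star y = y"
  proof -
    have "emb (star y) = emb y" using star_evalU[of w e, OF sa] by (simp add: ustar_emb[symmetric] Ey)
    then show ?thesis by (metis emb_simps(1))
  qed
  have pow_bound: "norm (npow y N) \<le> real ((2 * (N * deg e) + 1) ^ m) * Bd ^ N * norm y" for N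
  proof -
    have lp: "LP m u (deg (pw e N)) (\<lambda>t. complex_of_real (evalR (\<lambda>j. cos (t j)) (pw e N)))
            (evalU (\<lambda>j. cc (1/2) * (u j + ustar (u j))) (pw e N))"
      by (rule LP_eval[OF vb_pw[OF vbe] un])
    have ev: "evalU (\<lambda>j. cc (1/2) * (u j + ustar (u j))) (pw e N) = evalU (\<lambda>j. emb (w j)) (pw e N)"
      by (rule evalU_cong[OF vb_pw[OF vbe]]) (simp add: uw)
    have Fb: "\<forall>t. norm (complex_of_real (evalR (\<lambda>j. cos (t j)) (pw e N))) \<le> Bd ^ N"
    proof
      fix t :: "nat \<Rightarrow> real"
      have "\<bar>evalR (\<lambda>j. cos (t j)) e\<bar> \<le> Bd" by (rule bnd) simp
      then have "\<bar>evalR (\<lambda>j. cos (t j)) e\<bar> ^ N \<le> Bd ^ N" by (rule power_mono) simp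
      then show "norm (complex_of_real (evalR (\<lambda>j. cos (t j)) (pw e N))) \<le> Bd ^ N"
        by (simp add: evalR_pw norm_power)
    qed
    have act_eq: "npow y N = act (evalU (\<lambda>j. emb (w j)) (pw e N)) y"
    proof -
      have "emb (npow y N) = evalU (\<lambda>j. emb (w j)) (pw e N) * emb y"
        by (simp add: emb_npow evalU_pw Ey mult.commute)
      then show ?thesis by (metis act_emb emb_simps(1))
    qed
    have "norm (npow y N) \<le> real (card (Kset m (deg (pw e N)))) * Bd ^ N * norm y"
      unfolding act_eq using LP_bound[OF lp un Fb] ev by simp
    also have "\<dots> \<le> real ((2 * (N * deg e) + 1) ^ m) * Bd ^ N * norm y"
    proof -
      have c: "real (card (Kset m (deg (pw e N)))) \<le> real ((2 * (N * deg e) + 1) ^ m)"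
        using card_Kset[of m "deg (pw e N)"] by (simp only: deg_pw of_nat_le_iff)
      show ?thesis using Bd0 by (intro mult_right_mono c) auto
    qed
    finally show ?thesis .
  qed
  have sq: "norm (npow y (2 ^ k - 1)) = norm y ^ (2 ^ k)" for k
  proof (induction k)
    case 0 then show ?case by simp
  next
    case (Suc k)
    let ?z = "npow y (2 ^ k - 1)"
    have "emb (npow y (2 ^ Suc k - 1)) = emb (?z * ?z)"
    proof -
      have "Suc (2 ^ Suc k - 1) = Suc (2 ^ k - 1) + Suc (2 ^ k - 1)" by simp
      then show ?thesis by (simp only: emb_npow emb_mult power_add[symmetric])
    qed
    then have e1: "npow y (2 ^ Suc k - 1) = ?z * ?z" by (metis emb_simps(1))
    have "star ?z = ?z" by (simp add: star_npow sy)
    then have "norm (?z * ?z) = (norm ?z)\<^sup>2" by (metis cstar_identity)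
    then show ?case using e1 Suc by (simp add: power_mult[symmetric] power_Suc2 mult.commute)
  qed
  show ?thesis
  proof (cases "norm y = 0")
    case True then show ?thesis using Bd0 by (simp add: y_def)
  next
    case False
    then have ny: "0 < norm y" by simp
    have Hk: "norm y ^ (2 ^ Suc k - 1) \<le> (2 * real (2 ^ Suc k - 1) * real (deg e) + 1) ^ m * Bd ^ (2 ^ Suc k - 1)" for k
    proof -
      define N :: nat where "N = 2 ^ Suc k - 1"
      have SN: "Suc N = 2 ^ Suc k" unfolding N_def by simp
      have e1: "norm (npow y N) = norm y ^ (2 ^ Suc k)" unfolding N_def by (rule sq)
      have e2: "norm (npow y N) = norm y ^ Suc N" using e1 unfolding SN[symmetric] .
      have "norm y ^ Suc N \<le> real ((2 * (N * deg e) + 1) ^ m) * Bd ^ N * norm y"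
        using pow_bound[of N] unfolding e2 .
      then have "norm y ^ N * norm y \<le> real ((2 * (N * deg e) + 1) ^ m) * Bd ^ N * norm y"
        by (simp only: power_Suc2)
      then have "norm y ^ N \<le> real ((2 * (N * deg e) + 1) ^ m) * Bd ^ N" using ny by simp
      moreover have "real ((2 * (N * deg e) + 1) ^ m) = (2 * real N * real (deg e) + 1) ^ m" by (simp add: algebra_simps)
      ultimately have "norm y ^ N \<le> (2 * real N * real (deg e) + 1) ^ m * Bd ^ N" by simp
      then show ?thesis unfolding N_def .
    qed
    from growth_bound[OF norm_ge_zero Bd0 Hk] show ?thesis by (simp add: y_def)
  qed
qed




fun subst :: "(nat \<Rightarrow> pexp) \<Rightarrow> pexp \<Rightarrow> pexp" where
  "subst \<sigma> (Var i) = \<sigma> i"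
| "subst \<sigma> (Cst c) = Cst c"
| "subst \<sigma> (Add e1 e2) = Add (subst \<sigma> e1) (subst \<sigma> e2)"
| "subst \<sigma> (Mul e1 e2) = Mul (subst \<sigma> e1) (subst \<sigma> e2)"

lemma evalR_subst: "evalR r (subst \<sigma> e) = evalR (\<lambda>j. evalR r (\<sigma> j)) e"
  by (induction e) auto
lemma evalU_subst: "evalU r (subst \<sigma> e) = evalU (\<lambda>j. evalU r (\<sigma> j)) e"
  by (induction e) auto
lemma vb_subst: "vb k e \<Longrightarrow> (\<And>j. j < k \<Longrightarrow> vb m (\<sigma> j)) \<Longrightarrow> vb m (subst \<sigma> e)"
  by (induction e) auto

definition Sub :: "pexp \<Rightarrow> pexp \<Rightarrow> pexp" where "Sub e1 e2 = Add e1 (Mul (Cst (-1)) e2)"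

lemma evalR_Sub [simp]: "evalR r (Sub e1 e2) = evalR r e1 - evalR r e2"
  by (simp add: Sub_def)
lemma vb_Sub [simp]: "vb m (Sub e1 e2) = (vb m e1 \<and> vb m e2)"
  by (simp add: Sub_def)

lemma uA_cc_mult: "uA (cc c * Y) = scaleC c (uA Y)" by simp

lemma evalA_Add: "evalA w (Add e1 e2) = evalA w e1 + evalA w e2"
  by (simp add: evalA_def)

lemma evalA_Sub: "evalA w (Sub e1 e2) = evalA w e1 - evalA w e2"
proof -
  have "uA (cc (complex_of_real (-1)) * evalU (\<lambda>j. emb (w j)) e2) = - uA (evalU (\<lambda>j. emb (w j)) e2)"
    unfolding uA_cc_mult by (simp add: scaleC_minus_left scaleC_one)
  then show ?thesis by (simp add: evalA_def Sub_def del: uA_simps(11))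
qed

lemma evalA_Mul:
  assumes "evalR (\<lambda>_. 0) e1 = 0" "evalR (\<lambda>_. 0) e2 = 0"
  shows "evalA w (Mul e1 e2) = evalA w e1 * evalA w e2"
  using assms by (simp add: evalA_def uC_evalU)

lemma cstar_gen_props:
  shows "cstar_subalgebra (cstar_gen S)" and "S \<subseteq> cstar_gen S"
proof -
  show "S \<subseteq> cstar_gen S" unfolding cstar_gen_def by blast
  show "cstar_subalgebra (cstar_gen S)"
    unfolding cstar_subalgebra_def cstar_gen_def
    by (auto intro!: closed_Inter simp: cstar_subalgebra_def)
qed

lemma uA_evalU_mem:
  assumes B: "cstar_subalgebra B" and v: "\<And>j. v j \<in> B"
  shows "uA (evalU (\<lambda>j. emb (v j)) e) \<in> B"
proof (induction e)
  case (Var i) then show ?case using v by simp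
next
  case (Cst c) then show ?case using B by (simp add: cstar_subalgebra_def cc_def)
next
  case (Add e1 e2) then show ?case using B by (simp add: cstar_subalgebra_def)
next
  case (Mul e1 e2) then show ?case using B by (simp add: cstar_subalgebra_def)
qed

lemma rpf2:
  fixes f :: "real \<times> real \<Rightarrow> real"
  assumes "real_polynomial_function f"
  shows "\<exists>e. vb 2 e \<and> (\<forall>\<theta>. evalR \<theta> e = f (\<theta> 0, \<theta> 1))"
  using assms
proof (induction f rule: real_polynomial_function.induct)
  case (linear f)
  have fl: "f (x, y) = x * f (1, 0) + y * f (0, 1)" for x y
  proof -
    have lin: "linear f" using linear by (rule bounded_linear.linear)
    have xy: "(x, y) = x *\<^sub>R (1, 0) + y *\<^sub>R (0, 1)" by simp
    have "f (x, y) = f (x *\<^sub>R (1, 0) + y *\<^sub>R (0, 1))" by (subst xy) (rule refl)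
    also have "\<dots> = x *\<^sub>R f (1, 0) + y *\<^sub>R f (0, 1)"
      by (simp only: linear_add[OF lin] linear_scale[OF lin])
    finally show ?thesis by simp
  qed
  show ?case
  proof (intro exI[of _ "Add (Mul (Var 0) (Cst (f (1, 0)))) (Mul (Var 1) (Cst (f (0, 1))))"] conjI allI)
    fix \<theta> :: "nat \<Rightarrow> real"
    show "evalR \<theta> (Add (Mul (Var 0) (Cst (f (1, 0)))) (Mul (Var 1) (Cst (f (0, 1))))) = f (\<theta> 0, \<theta> 1)"
      using fl[of "\<theta> 0" "\<theta> 1"] by simp
  qed simp
next
  case (const c) then show ?case by (intro exI[of _ "Cst c"]) simp
next
  case (add f g)
  then obtain e1 e2 where "vb 2 e1" "\<forall>\<theta>. evalR \<theta> e1 = f (\<theta> 0, \<theta> 1)" "vb 2 e2" "\<forall>\<theta>. evalR \<theta> e2 = g (\<theta> 0, \<theta> 1)"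
    by blast
  then show ?case by (intro exI[of _ "Add e1 e2"]) simp
next
  case (mult f g)
  then obtain e1 e2 where "vb 2 e1" "\<forall>\<theta>. evalR \<theta> e1 = f (\<theta> 0, \<theta> 1)" "vb 2 e2" "\<forall>\<theta>. evalR \<theta> e2 = g (\<theta> 0, \<theta> 1)"
    by blast
  then show ?case by (intro exI[of _ "Mul e1 e2"]) simp
qed

lemma rpf1:
  fixes f :: "real \<Rightarrow> real"
  assumes "real_polynomial_function f"
  shows "\<exists>e. vb 1 e \<and> (\<forall>\<theta>. evalR \<theta> e = f (\<theta> 0))"
  using assms
proof (induction f rule: real_polynomial_function.induct)
  case (linear f)
  have fl: "f x = x * f 1" for x
  proof -
    have lin: "linear f" using linear by (rule bounded_linear.linear)
    have "f x = f (x *\<^sub>R 1)" by simp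
    also have "\<dots> = x *\<^sub>R f 1" by (simp only: linear_scale[OF lin])
    finally show ?thesis by simp
  qed
  show ?case
  proof (intro exI[of _ "Mul (Var 0) (Cst (f 1))"] conjI allI)
    fix \<theta> :: "nat \<Rightarrow> real"
    show "evalR \<theta> (Mul (Var 0) (Cst (f 1))) = f (\<theta> 0)" using fl[of "\<theta> 0"] by simp
  qed simp
next
  case (const c) then show ?case by (intro exI[of _ "Cst c"]) simp
next
  case (add f g)
  then obtain e1 e2 where "vb 1 e1" "\<forall>\<theta>. evalR \<theta> e1 = f (\<theta> 0)" "vb 1 e2" "\<forall>\<theta>. evalR \<theta> e2 = g (\<theta> 0)"
    by blast
  then show ?case by (intro exI[of _ "Add e1 e2"]) simp
next
  case (mult f g)
  then obtain e1 e2 where "vb 1 e1" "\<forall>\<theta>. evalR \<theta> e1 = f (\<theta> 0)" "vb 1 e2" "\<forall>\<theta>. evalR \<theta> e2 = g (\<theta> 0)"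
    by blast
  then show ?case by (intro exI[of _ "Mul e1 e2"]) simp
qed

lemma approx2:
  fixes f :: "real \<times> real \<Rightarrow> real"
  assumes R: "compact R" and f: "continuous_on R f" and f0: "f (0, 0) = 0" and R0: "(0, 0) \<in> R"
  shows "\<exists>Q. \<forall>n. vb 2 (Q n) \<and> evalR (\<lambda>_. 0) (Q n) = 0 \<and>
      (\<forall>\<theta>. (\<theta> 0, \<theta> 1) \<in> R \<longrightarrow> \<bar>evalR \<theta> (Q n) - f (\<theta> 0, \<theta> 1)\<bar> \<le> inverse (real (Suc n)))"
proof -
  have "\<exists>e. vb 2 e \<and> evalR (\<lambda>_. 0) e = 0 \<and>
      (\<forall>\<theta>. (\<theta> 0, \<theta> 1) \<in> R \<longrightarrow> \<bar>evalR \<theta> e - f (\<theta> 0, \<theta> 1)\<bar> \<le> inverse (real (Suc n)))" for n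
  proof -
    define \<epsilon> where "\<epsilon> = inverse (real (Suc n)) / 2"
    have \<epsilon>: "0 < \<epsilon>" unfolding \<epsilon>_def by simp
    obtain g where g: "polynomial_function g" "\<forall>x\<in>R. norm (f x - g x) < \<epsilon>"
      using Stone_Weierstrass_polynomial_function[OF R f \<epsilon>] by blast
    obtain e where e: "vb 2 e" "\<forall>\<theta>. evalR \<theta> e = g (\<theta> 0, \<theta> 1)"
      using rpf2 g(1) real_polynomial_function_eq by blast
    show ?thesis
    proof (intro exI[of _ "Sub e (Cst (g (0, 0)))"] conjI allI impI)
      show "vb 2 (Sub e (Cst (g (0, 0))))" using e by simp
      show "evalR (\<lambda>_. 0) (Sub e (Cst (g (0, 0)))) = 0" using e by simp
      fix \<theta> :: "nat \<Rightarrow> real" assume th: "(\<theta> 0, \<theta> 1) \<in> R"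
      have A: "\<bar>g (\<theta> 0, \<theta> 1) - f (\<theta> 0, \<theta> 1)\<bar> < \<epsilon>" using g(2) th by (simp add: abs_minus_commute)
      have B: "\<bar>g (0, 0)\<bar> < \<epsilon>" using g(2)[rule_format, OF R0] f0 by (simp add: abs_minus_commute)
      have "evalR \<theta> (Sub e (Cst (g (0, 0)))) - f (\<theta> 0, \<theta> 1) = (g (\<theta> 0, \<theta> 1) - f (\<theta> 0, \<theta> 1)) - g (0, 0)"
        using e by simp
      then show "\<bar>evalR \<theta> (Sub e (Cst (g (0, 0)))) - f (\<theta> 0, \<theta> 1)\<bar> \<le> inverse (real (Suc n))"
        using A[unfolded abs_less_iff] B[unfolded abs_less_iff] unfolding \<epsilon>_def abs_le_iff by linarith
    qed
  qed
  then show ?thesis by (intro choice allI)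
qed

lemma approx1:
  fixes f :: "real \<Rightarrow> real"
  assumes R: "compact R" and f: "continuous_on R f" and f0: "f 0 = 0" and R0: "0 \<in> R"
  shows "\<exists>Q. \<forall>n. vb 1 (Q n) \<and> evalR (\<lambda>_. 0) (Q n) = 0 \<and>
      (\<forall>\<theta>. \<theta> 0 \<in> R \<longrightarrow> \<bar>evalR \<theta> (Q n) - f (\<theta> 0)\<bar> \<le> inverse (real (Suc n)))"
proof -
  have "\<exists>e. vb 1 e \<and> evalR (\<lambda>_. 0) e = 0 \<and>
      (\<forall>\<theta>. \<theta> 0 \<in> R \<longrightarrow> \<bar>evalR \<theta> e - f (\<theta> 0)\<bar> \<le> inverse (real (Suc n)))" for n
  proof -
    define \<epsilon> where "\<epsilon> = inverse (real (Suc n)) / 2"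
    have \<epsilon>: "0 < \<epsilon>" unfolding \<epsilon>_def by simp
    obtain g where g: "polynomial_function g" "\<forall>x\<in>R. norm (f x - g x) < \<epsilon>"
      using Stone_Weierstrass_polynomial_function[OF R f \<epsilon>] by blast
    obtain e where e: "vb 1 e" "\<forall>\<theta>. evalR \<theta> e = g (\<theta> 0)"
      using rpf1 g(1) real_polynomial_function_eq by blast
    show ?thesis
    proof (intro exI[of _ "Sub e (Cst (g 0))"] conjI allI impI)
      show "vb 1 (Sub e (Cst (g 0)))" using e by simp
      show "evalR (\<lambda>_. 0) (Sub e (Cst (g 0))) = 0" using e by simp
      fix \<theta> :: "nat \<Rightarrow> real" assume th: "\<theta> 0 \<in> R"
      have A: "\<bar>g (\<theta> 0) - f (\<theta> 0)\<bar> < \<epsilon>" using g(2) th by (simp add: abs_minus_commute)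
      have B: "\<bar>g 0\<bar> < \<epsilon>" using g(2)[rule_format, OF R0] f0 by (simp add: abs_minus_commute)
      have "evalR \<theta> (Sub e (Cst (g 0))) - f (\<theta> 0) = (g (\<theta> 0) - f (\<theta> 0)) - g 0"
        using e by simp
      then show "\<bar>evalR \<theta> (Sub e (Cst (g 0))) - f (\<theta> 0)\<bar> \<le> inverse (real (Suc n))"
        using A[unfolded abs_less_iff] B[unfolded abs_less_iff] unfolding \<epsilon>_def abs_le_iff by linarith
    qed
  qed
  then show ?thesis by (intro choice allI)
qed

lemma calc_limit:
  fixes W :: "nat \<Rightarrow> 'a::comm_cstar_algebra"
  assumes sa: "\<And>j. star (W j) = W j" and nw: "\<And>j. j < m \<Longrightarrow> norm (W j) < 1"
    and E: "\<And>n. vb m (E n)" "\<And>n. evalR (\<lambda>_. 0) (E n) = 0"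
    and ap: "\<And>n \<theta>. (\<And>j. \<bar>\<theta> j\<bar> \<le> 1) \<Longrightarrow> \<bar>evalR \<theta> (E n) - \<phi> \<theta>\<bar> \<le> inverse (real (Suc n))"
  shows "convergent (\<lambda>n. evalA W (E n))"
proof -
  have dist_b: "dist (evalA W (E n)) (evalA W (E k)) \<le> inverse (real (Suc n)) + inverse (real (Suc k))" for n k
  proof -
    have "norm (evalA W (Sub (E n) (E k))) \<le> inverse (real (Suc n)) + inverse (real (Suc k))"
    proof (rule engine[OF sa nw])
      show "vb m (Sub (E n) (E k))" using E by simp
      show "evalR (\<lambda>_. 0) (Sub (E n) (E k)) = 0" using E by simp
      fix \<theta> :: "nat \<Rightarrow> real" assume th: "\<And>j. \<bar>\<theta> j\<bar> \<le> 1"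
      have "\<bar>evalR \<theta> (E n) - \<phi> \<theta>\<bar> \<le> inverse (real (Suc n))" "\<bar>evalR \<theta> (E k) - \<phi> \<theta>\<bar> \<le> inverse (real (Suc k))"
        using ap th by auto
      then show "\<bar>evalR \<theta> (Sub (E n) (E k))\<bar> \<le> inverse (real (Suc n)) + inverse (real (Suc k))"
        by simp
    qed
    then show ?thesis by (simp add: dist_norm evalA_Sub)
  qed
  have "Cauchy (\<lambda>n. evalA W (E n))"
  proof (rule CauchyI')
    fix e :: real assume e: "0 < e"
    obtain N :: nat where N: "inverse (real (Suc N)) < e / 2"
      using reals_Archimedean[of "e/2"] e by (auto simp del: of_nat_Suc)
    show "\<exists>M. \<forall>n\<ge>M. \<forall>k>n. dist (evalA W (E n)) (evalA W (E k)) < e"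
    proof (intro exI allI impI)
      fix n k assume nk: "N \<le> n" "n < k"
      have "inverse (real (Suc n)) \<le> inverse (real (Suc N))" "inverse (real (Suc k)) \<le> inverse (real (Suc N))"
        using nk by (simp_all add: le_imp_inverse_le del: of_nat_Suc)
      then show "dist (evalA W (E n)) (evalA W (E k)) < e" using dist_b[of n k] N by linarith
    qed
  qed
  then show ?thesis by (rule Cauchy_convergent)
qed

lemma inv_Suc_lim: "(\<lambda>n. C * inverse (real (Suc n))) \<longlonglongrightarrow> 0"
  using tendsto_mult[OF tendsto_const[of C] LIMSEQ_inverse_real_of_nat] by simp

lemma lim_norm_le:
  fixes X :: "nat \<Rightarrow> 'a::real_normed_vector"
  assumes "X \<longlonglongrightarrow> l" "\<And>n. norm (X n) \<le> M + C * inverse (real (Suc n))"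
  shows "norm l \<le> M"
proof -
  have "(\<lambda>n. norm (X n)) \<longlonglongrightarrow> norm l" using assms(1) by (rule tendsto_norm)
  moreover have "(\<lambda>n. M + C * inverse (real (Suc n))) \<longlonglongrightarrow> M + 0"
    by (intro tendsto_add tendsto_const inv_Suc_lim)
  ultimately have "norm l \<le> M + 0"
    by (rule LIMSEQ_le) (use assms(2) in blast)
  then show ?thesis by simp
qed

lemma lim_diff_zero:
  fixes X Y :: "nat \<Rightarrow> 'a::real_normed_vector"
  assumes "X \<longlonglongrightarrow> l" "Y \<longlonglongrightarrow> l'" "\<And>n. norm (X n - Y n) \<le> C * inverse (real (Suc n))"
  shows "l = l'"
proof -
  have "(\<lambda>n. X n - Y n) \<longlonglongrightarrow> l - l'" using assms by (intro tendsto_diff)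
  then have "norm (l - l') \<le> 0" by (rule lim_norm_le[where C=C]) (use assms(3) in simp)
  then show ?thesis by simp
qed




lemma sa_decomp:
  fixes b :: "'a::comm_cstar_algebra"
  defines "p1 \<equiv> (1/2) *\<^sub>R (b + star b)" and "p2 \<equiv> scaleC (- \<i> / 2) (b - star b)"
  shows "star p1 = p1" "star p2 = p2" "p1 * p1 + p2 * p2 = star b * b"
    "norm p1 \<le> norm b" "norm p2 \<le> norm b"
proof -
  show "star p1 = p1" unfolding p1_def by (simp add: star_scaleR star_add star_star add.commute)
  show "star p2 = p2" unfolding p2_def
    by (simp add: star_scaleC star_diff star_star scaleC_diff_right scaleC_minus_left)
  have "emb (p1 * p1 + p2 * p2) = cc (1/4) * ((emb b + emb (star b)) * (emb b + emb (star b)))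
        - cc (1/4) * ((emb b - emb (star b)) * (emb b - emb (star b)))"
  proof -
    have e1: "emb p1 = cc (1/2) * (emb b + emb (star b))"
      unfolding p1_def by (rule ua_eqI) (simp_all add: scaleC_real[symmetric])
    have e2: "emb p2 = cc (- \<i> / 2) * (emb b - emb (star b))"
      unfolding p2_def by (rule ua_eqI) simp_all
    have "emb (p1 * p1 + p2 * p2) = emb p1 * emb p1 + emb p2 * emb p2" by (simp add: emb_add emb_mult)
    also have "\<dots> = (cc (1/2) * cc (1/2)) * ((emb b + emb (star b)) * (emb b + emb (star b)))
        + (cc (- \<i> / 2) * cc (- \<i> / 2)) * ((emb b - emb (star b)) * (emb b - emb (star b)))"
      unfolding e1 e2 by (simp add: algebra_simps)
    also have "cc (1/2) * cc (1/2) = (cc (1/4) :: 'a ua)" by (simp flip: cc_mult)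
    also have "cc (- \<i> / 2) * cc (- \<i> / 2) = (- cc (1/4) :: 'a ua)"
      by (simp flip: cc_mult) (rule ua_eqI; simp)
    finally show ?thesis by simp
  qed
  also have "\<dots> = cc (1/4) * (cc 4 * (emb (star b) * emb b))"
  proof -
    have "(cc 4 :: 'a ua) = 4"
    proof -
      have "(cc 4 :: 'a ua) = cc (1 + 1 + 1 + 1)" by simp
      also have "\<dots> = 4" by (simp only: cc_add cc_one) simp
      finally show ?thesis .
    qed
    then show ?thesis by (simp add: algebra_simps)
  qed
  also have "\<dots> = emb (star b * b)"
  proof -
    have "cc (1/4) * (cc 4 * (emb (star b) * emb b)) = cc (1/4 * 4) * (emb (star b) * emb b)"
      by (simp only: cc_mult mult.assoc)
    then show ?thesis by (simp add: emb_mult)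
  qed
  finally show "p1 * p1 + p2 * p2 = star b * b" by (metis emb_simps(1))
  show "norm p1 \<le> norm b"
  proof -
    have "norm p1 = (1/2) * norm (b + star b)" by (simp add: p1_def)
    also have "\<dots> \<le> (1/2) * (norm b + norm (star b))" by (intro mult_left_mono norm_triangle_ineq) auto
    finally show ?thesis by simp
  qed
  show "norm p2 \<le> norm b"
  proof -
    have "norm p2 = (1/2) * norm (b - star b)" by (simp add: p2_def norm_scaleC norm_divide)
    also have "\<dots> \<le> (1/2) * (norm b + norm (star b))" by (intro mult_left_mono norm_triangle_ineq4) auto
    finally show ?thesis by simp
  qed
qed

definition phiF :: "real \<Rightarrow> real \<Rightarrow> real" where "phiF r s = max 0 (s - r)"
definition GF :: "real \<Rightarrow> real \<Rightarrow> real \<times> real \<Rightarrow> real" where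
  "GF r c p = min 1 (phiF r (fst p) / max (snd p) c)"

lemma phiF_nonneg: "0 \<le> phiF r s" by (simp add: phiF_def)
lemma phiF_0: "0 \<le> r \<Longrightarrow> phiF r 0 = 0" by (simp add: phiF_def)
lemma phiF_close: "0 \<le> s \<Longrightarrow> 0 \<le> r \<Longrightarrow> \<bar>s - phiF r s\<bar> \<le> r" by (simp add: phiF_def)
lemma phiF_le: "0 \<le> r \<Longrightarrow> s \<le> 8 \<Longrightarrow> phiF r s \<le> 8" by (simp add: phiF_def)

lemma GF_bounds: "0 < c \<Longrightarrow> 0 \<le> GF r c p \<and> GF r c p \<le> 1"
  by (auto simp: GF_def phiF_nonneg)

lemma GF_0: "0 \<le> r \<Longrightarrow> GF r c (0, 0) = 0" by (simp add: GF_def phiF_0)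

lemma GF_strip:
  assumes c: "0 < c" "c + \<kappa> = r" "0 \<le> \<kappa>" and s: "0 \<le> s" and xi: "\<bar>\<xi>\<bar> \<le> \<kappa>"
  shows "GF r c (s, s + \<xi>) * (s + \<xi>) = phiF r s"
proof (cases "s \<le> r")
  case True then show ?thesis by (simp add: GF_def phiF_def)
next
  case False
  have t: "c \<le> s + \<xi>" using False c xi by (simp add: abs_le_iff)
  then have mx: "max (s + \<xi>) c = s + \<xi>" by simp
  have tpos: "0 < s + \<xi>" using t c by simp
  have "(s - r) / (s + \<xi>) \<le> 1" using tpos xi c by (simp add: abs_le_iff)
  then show ?thesis using False tpos by (simp add: GF_def phiF_def mx)
qed

lemma cont_phiF: "continuous_on S (phiF r)"
  unfolding phiF_def by (intro continuous_intros)

lemma cont_GF: "0 < c \<Longrightarrow> continuous_on S (GF r c)"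
  unfolding GF_def phiF_def by (intro continuous_intros) auto




lemma sq_le1: "\<bar>t::real\<bar> \<le> 1 \<Longrightarrow> 0 \<le> t * t \<and> t * t \<le> 1"
proof -
  assume "\<bar>t\<bar> \<le> 1"
  then have "\<bar>t\<bar> * \<bar>t\<bar> \<le> 1 * 1" by (intro mult_mono) auto
  then show ?thesis by (simp add: abs_mult_self_eq)
qed

lemma sq_diff_bound:
  fixes q v e M :: real
  assumes "\<bar>q - v\<bar> \<le> e" "0 \<le> v" "v \<le> M" "e \<le> 1"
  shows "\<bar>q * q - v * v\<bar> \<le> (2 * M + 1) * e"
proof -
  have "\<bar>q + v\<bar> \<le> \<bar>q - v\<bar> + 2 * \<bar>v\<bar>" by linarith
  also have "\<dots> \<le> 2 * M + 1" using assms by linarith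
  finally have qv: "\<bar>q + v\<bar> \<le> 2 * M + 1" .
  have "\<bar>q * q - v * v\<bar> = \<bar>q - v\<bar> * \<bar>q + v\<bar>" by (simp add: abs_mult[symmetric] algebra_simps)
  also have "\<dots> \<le> e * (2 * M + 1)" using assms(1) qv by (intro mult_mono) auto
  finally show ?thesis by (simp add: mult.commute)
qed

lemma abs_tri: "\<bar>a - b\<bar> \<le> e1 \<Longrightarrow> \<bar>b - c\<bar> \<le> e2 \<Longrightarrow> \<bar>a - (c::real)\<bar> \<le> e1 + e2"
  by (simp add: abs_le_iff)

lemma star_pos: "star (star b * b) = star b * (b :: 'a::comm_cstar_algebra)"
  by (simp add: star_mult star_star)

lemma norm_of_pos:
  fixes b :: "'a::comm_cstar_algebra"
  assumes "norm (star b * b) = 1" shows "norm b = 1"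
proof -
  have "(norm b)\<^sup>2 = 1\<^sup>2" using cstar_identity[of b] assms by simp
  then show ?thesis using power2_eq_iff_nonneg[of "norm b" 1] by simp
qed

lemma closed_mem_lim:
  assumes "cstar_subalgebra B" "\<And>n. X n \<in> B" "X \<longlonglongrightarrow> l" shows "l \<in> B"
  using assms closed_sequentially unfolding cstar_subalgebra_def by blast

lemma star_lim:
  fixes X :: "nat \<Rightarrow> 'a::comm_cstar_algebra"
  assumes "X \<longlonglongrightarrow> l" "\<And>n. star (X n) = X n" shows "star l = l"
proof -
  have "(\<lambda>n. star (X n)) \<longlonglongrightarrow> star l" by (rule bounded_linear.tendsto[OF bounded_linear_star assms(1)])
  then have "X \<longlonglongrightarrow> star l" using assms(2) by simp
  then show ?thesis using assms(1) LIMSEQ_unique by blast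
qed

lemma star_evalA:
  assumes "\<And>j. star (W j) = W j" shows "star (evalA W e) = evalA W e"
  using star_evalU[of W e, OF assms] unfolding evalA_def by (metis emb_simps(5) ustar_def ua.sel(1))

theorem proposition4p4:
  fixes a h :: "'a::comm_cstar_algebra" and \<delta> :: real
  assumes "positive a" and "positive h"
    and "norm a = 1" and "norm h = 1"
    and "0 < \<delta>" and "\<delta> \<le> 1"
    and "norm (a - h) < \<delta>"
  shows "\<exists>h' g. h' \<in> cstar_gen {h} \<and> positive h' \<and>
                g \<in> cstar_gen {h, a} \<and> positive g \<and>
                norm (h - h') < \<delta> \<and> norm g \<le> 1 \<and> g * a = h'"
proof -
  obtain bq where hb: "h = star bq * bq" using assms(2) unfolding positive_def by blast
  obtain dq where ad: "a = star dq * dq" using assms(1) unfolding positive_def by blast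
  have nbq: "norm bq = 1" using norm_of_pos[of bq] hb assms(4) by simp
  have ndq: "norm dq = 1" using norm_of_pos[of dq] ad assms(3) by simp
  define y1 where "y1 = (1/2) *\<^sub>R (bq + star bq)"
  define y2 where "y2 = scaleC (- \<i> / 2) (bq - star bq)"
  define z1 where "z1 = (1/2) *\<^sub>R (dq + star dq)"
  define z2 where "z2 = scaleC (- \<i> / 2) (dq - star dq)"
  note db = sa_decomp[of bq, folded y1_def y2_def]
  note dd = sa_decomp[of dq, folded z1_def z2_def]
  define x where "x = a - h"
  define \<eta> where "\<eta> = norm x"
  define \<kappa> where "\<kappa> = \<eta> + (\<delta> - \<eta>) / 3"
  define r where "r = \<eta> + 2 * (\<delta> - \<eta>) / 3"
  define c where "c = r - \<kappa>"
  have \<eta>\<delta>: "\<eta> < \<delta>" using assms(7) by (simp add: \<eta>_def x_def)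
  have \<eta>0: "0 \<le> \<eta>" by (simp add: \<eta>_def)
  have \<kappa>\<eta>: "\<eta> < \<kappa>" and \<kappa>0: "0 < \<kappa>" and \<kappa>1: "\<kappa> < 1" and c0: "0 < c" and cr: "c + \<kappa> = r"
    and r\<delta>: "r < \<delta>" and r0: "0 \<le> r" and \<kappa>r: "\<kappa> \<le> r"
    using \<eta>\<delta> \<eta>0 assms(6) by (auto simp: \<kappa>_def r_def c_def field_simps)
  have sh: "star h = h" using hb by (simp add: star_pos)
  have sa': "star a = a" using ad by (simp add: star_pos)
  have sx: "star x = x" by (simp add: x_def star_diff sh sa')
  define W :: "nat \<Rightarrow> 'a" where "W j = (if j = 0 then (1/2) *\<^sub>R y1 else if j = 1 then (1/2) *\<^sub>R y2
      else if j = 2 then (1/2) *\<^sub>R z1 else if j = 3 then (1/2) *\<^sub>R z2 else if j = 4 then (1/\<kappa>) *\<^sub>R x else 0)" for j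
  have saW: "star (W j) = W j" for j
    unfolding W_def using db dd sx by (simp add: star_scaleR)
  have nW: "norm (W j) < 1" if "j < 5" for j
  proof -
    have "j = 0 \<or> j = 1 \<or> j = 2 \<or> j = 3 \<or> j = 4" using that by auto
    moreover have "norm ((1/2) *\<^sub>R v) < 1" if "norm v \<le> 1" for v :: 'a using that by simp
    moreover have "norm ((1/\<kappa>) *\<^sub>R x) < 1" using \<kappa>\<eta> \<kappa>0 \<eta>0 by (simp add: \<eta>_def[symmetric] field_simps)
    ultimately show ?thesis unfolding W_def using db dd nbq ndq by auto
  qed
  define Sp where "Sp = Mul (Cst 4) (Add (Mul (Var 0) (Var 0)) (Mul (Var 1) (Var 1)))"
  define Tp where "Tp = Mul (Cst 4) (Add (Mul (Var 2) (Var 2)) (Mul (Var 3) (Var 3)))"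
  define Xp where "Xp = Mul (Cst \<kappa>) (Var 4)"
  let ?E = "\<lambda>e. evalU (\<lambda>j. emb (W j)) e"
  have four: "scaleC (complex_of_real 4) ((1/2) *\<^sub>R u * (1/2) *\<^sub>R u + (1/2) *\<^sub>R v * (1/2) *\<^sub>R v) = u * u + v * v"
    for u v :: 'a
    by (simp only: scaleC_real) (simp add: scaleR_add_right)
  have Wv: "W 0 = (1/2) *\<^sub>R y1" "W 1 = (1/2) *\<^sub>R y2" "W 2 = (1/2) *\<^sub>R z1" "W 3 = (1/2) *\<^sub>R z2"
    "W 4 = (1/\<kappa>) *\<^sub>R x" by (simp_all add: W_def)
  have eS: "?E Sp = emb h"
  proof -
    have "?E Sp = cc (complex_of_real 4) * (emb (W 0 * W 0 + W 1 * W 1))" by (simp add: Sp_def emb_add emb_mult)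
    also have "\<dots> = emb h" unfolding cc_emb Wv four db(3) hb ..
    finally show ?thesis .
  qed
  have eT: "?E Tp = emb a"
  proof -
    have "?E Tp = cc (complex_of_real 4) * (emb (W 2 * W 2 + W 3 * W 3))" by (simp add: Tp_def emb_add emb_mult)
    also have "\<dots> = emb a" unfolding cc_emb Wv four dd(3) ad ..
    finally show ?thesis .
  qed
  have eX: "?E Xp = emb x"
  proof -
    have "?E Xp = emb (scaleC (complex_of_real \<kappa>) (W 4))" by (simp add: Xp_def cc_emb)
    also have "\<dots> = emb x" using \<kappa>0 by (simp add: W_def scaleC_real)
    finally show ?thesis .
  qed
  have eSX: "?E (Add Sp Xp) = emb a" using eS eX by (simp add: x_def emb_add[symmetric])
  have vbS: "vb 5 Sp" "vb 5 Tp" "vb 5 Xp" "vb 5 (Add Sp Xp)" by (auto simp: Sp_def Tp_def Xp_def)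
  have z0: "evalR (\<lambda>_. 0) Sp = 0" "evalR (\<lambda>_. 0) Tp = 0" "evalR (\<lambda>_. 0) Xp = 0"
    by (auto simp: Sp_def Tp_def Xp_def)
  have rS: "0 \<le> evalR \<theta> Sp \<and> evalR \<theta> Sp \<le> 8" "0 \<le> evalR \<theta> Tp \<and> evalR \<theta> Tp \<le> 8"
      "\<bar>evalR \<theta> Xp\<bar> \<le> \<kappa>" if "\<And>j. \<bar>\<theta> j\<bar> \<le> 1" for \<theta>
  proof -
    have q: "0 \<le> \<theta> j * \<theta> j \<and> \<theta> j * \<theta> j \<le> 1" for j using sq_le1 that by blast
    show "0 \<le> evalR \<theta> Sp \<and> evalR \<theta> Sp \<le> 8" using q[of 0] q[of 1] by (simp add: Sp_def)
    show "0 \<le> evalR \<theta> Tp \<and> evalR \<theta> Tp \<le> 8" using q[of 2] q[of 3] by (simp add: Tp_def)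
    show "\<bar>evalR \<theta> Xp\<bar> \<le> \<kappa>" using that[of 4] \<kappa>0
      by (simp add: Xp_def abs_mult mult_left_le)
  qed
  define R1 where "R1 = {0..8::real}"
  define R2 where "R2 = cbox (0::real, -1::real) (8, 9)"
  have R2_iff: "(s, t) \<in> R2 \<longleftrightarrow> 0 \<le> s \<and> s \<le> 8 \<and> -1 \<le> t \<and> t \<le> 9" for s t
    by (simp add: R2_def cbox_Pair_eq)
  have cR1: "compact R1" unfolding R1_def by simp
  have cR2: "compact R2" unfolding R2_def by simp
  obtain P where P: "\<And>n. vb 1 (P n)" "\<And>n. evalR (\<lambda>_. 0) (P n) = 0"
    "\<And>n \<theta>. \<theta> 0 \<in> R1 \<Longrightarrow> \<bar>evalR \<theta> (P n) - phiF r (\<theta> 0)\<bar> \<le> inverse (real (Suc n))"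
    using approx1[OF cR1 cont_phiF phiF_0[OF r0]] unfolding R1_def by auto
  have csq1: "continuous_on R1 (\<lambda>s. sqrt (phiF r s))" unfolding phiF_def by (intro continuous_intros)
  obtain Pq where Pq: "\<And>n. vb 1 (Pq n)" "\<And>n. evalR (\<lambda>_. 0) (Pq n) = 0"
    "\<And>n \<theta>. \<theta> 0 \<in> R1 \<Longrightarrow> \<bar>evalR \<theta> (Pq n) - sqrt (phiF r (\<theta> 0))\<bar> \<le> inverse (real (Suc n))"
    using approx1[OF cR1 csq1] phiF_0[OF r0] unfolding R1_def by auto
  obtain Q where Q: "\<And>n. vb 2 (Q n)" "\<And>n. evalR (\<lambda>_. 0) (Q n) = 0"
    "\<And>n \<theta>. (\<theta> 0, \<theta> 1) \<in> R2 \<Longrightarrow> \<bar>evalR \<theta> (Q n) - GF r c (\<theta> 0, \<theta> 1)\<bar> \<le> inverse (real (Suc n))"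
    using approx2[OF cR2 cont_GF[OF c0] GF_0[OF r0]] by (auto simp: R2_def)
  have csq2: "continuous_on R2 (\<lambda>p. sqrt (GF r c p))"
    unfolding GF_def phiF_def using c0 by (intro continuous_intros) auto
  obtain Qc where Qc: "\<And>n. vb 2 (Qc n)" "\<And>n. evalR (\<lambda>_. 0) (Qc n) = 0"
    "\<And>n \<theta>. (\<theta> 0, \<theta> 1) \<in> R2 \<Longrightarrow> \<bar>evalR \<theta> (Qc n) - sqrt (GF r c (\<theta> 0, \<theta> 1))\<bar> \<le> inverse (real (Suc n))"
    using approx2[OF cR2 csq2] GF_0[OF r0] by (auto simp: R2_def)
  define \<sigma>1 :: "nat \<Rightarrow> pexp" where "\<sigma>1 j = Sp" for j
  define \<sigma>2 :: "nat \<Rightarrow> pexp" where "\<sigma>2 j = (if j = 0 then Sp else Tp)" for j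
  define \<sigma>3 :: "nat \<Rightarrow> pexp" where "\<sigma>3 j = (if j = 0 then Sp else Add Sp Xp)" for j
  define Fn where "Fn n = subst \<sigma>1 (P n)" for n
  define Hn where "Hn n = subst \<sigma>1 (Pq n)" for n
  define Gn where "Gn n = subst \<sigma>2 (Q n)" for n
  define Cn where "Cn n = subst \<sigma>2 (Qc n)" for n
  define Gn' where "Gn' n = subst \<sigma>3 (Q n)" for n
  have s0: "(\<lambda>j. evalR (\<lambda>_. 0) (\<sigma>1 j)) = (\<lambda>_. 0)" "(\<lambda>j. evalR (\<lambda>_. 0) (\<sigma>2 j)) = (\<lambda>_. 0)"
    "(\<lambda>j. evalR (\<lambda>_. 0) (\<sigma>3 j)) = (\<lambda>_. 0)"
    using z0 by (auto simp: \<sigma>1_def \<sigma>2_def \<sigma>3_def)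
  have vbs: "vb 5 (Fn n)" "vb 5 (Hn n)" "vb 5 (Gn n)" "vb 5 (Cn n)" "vb 5 (Gn' n)" for n
    unfolding Fn_def Hn_def Gn_def Cn_def Gn'_def
    by (auto intro!: vb_subst P Pq Q Qc simp: \<sigma>1_def \<sigma>2_def \<sigma>3_def vbS)
  have zs: "evalR (\<lambda>_. 0) (Fn n) = 0" "evalR (\<lambda>_. 0) (Hn n) = 0" "evalR (\<lambda>_. 0) (Gn n) = 0"
      "evalR (\<lambda>_. 0) (Cn n) = 0" "evalR (\<lambda>_. 0) (Gn' n) = 0" for n
    unfolding Fn_def Hn_def Gn_def Cn_def Gn'_def evalR_subst s0 using P Pq Q Qc by auto
  let ?inv = "\<lambda>n. inverse (real (Suc n))"
  have inv1: "?inv n \<le> 1" for n by (simp add: inverse_le_1_iff)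
  have inv0: "0 \<le> ?inv n" for n by simp
  have apF: "\<bar>evalR \<theta> (Fn n) - phiF r (evalR \<theta> Sp)\<bar> \<le> ?inv n"
    and apH: "\<bar>evalR \<theta> (Hn n) - sqrt (phiF r (evalR \<theta> Sp))\<bar> \<le> ?inv n"
    if th: "\<And>j. \<bar>\<theta> j\<bar> \<le> 1" for \<theta> n
  proof -
    have m: "(\<lambda>j. evalR \<theta> (\<sigma>1 j)) 0 \<in> R1" using rS(1)[of \<theta>, OF th] by (simp add: \<sigma>1_def R1_def)
    show "\<bar>evalR \<theta> (Fn n) - phiF r (evalR \<theta> Sp)\<bar> \<le> ?inv n"
      using P(3)[of "\<lambda>j. evalR \<theta> (\<sigma>1 j)" n] m by (simp add: Fn_def evalR_subst \<sigma>1_def)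
    show "\<bar>evalR \<theta> (Hn n) - sqrt (phiF r (evalR \<theta> Sp))\<bar> \<le> ?inv n"
      using Pq(3)[of "\<lambda>j. evalR \<theta> (\<sigma>1 j)" n] m by (simp add: Hn_def evalR_subst \<sigma>1_def)
  qed
  have apG: "\<bar>evalR \<theta> (Gn n) - GF r c (evalR \<theta> Sp, evalR \<theta> Tp)\<bar> \<le> ?inv n"
    and apC: "\<bar>evalR \<theta> (Cn n) - sqrt (GF r c (evalR \<theta> Sp, evalR \<theta> Tp))\<bar> \<le> ?inv n"
    if th: "\<And>j. \<bar>\<theta> j\<bar> \<le> 1" for \<theta> n
  proof -
    have m: "((\<lambda>j. evalR \<theta> (\<sigma>2 j)) 0, (\<lambda>j. evalR \<theta> (\<sigma>2 j)) 1) \<in> R2"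
      using rS(1)[of \<theta>, OF th] rS(2)[of \<theta>, OF th] by (simp add: \<sigma>2_def R2_iff)
    show "\<bar>evalR \<theta> (Gn n) - GF r c (evalR \<theta> Sp, evalR \<theta> Tp)\<bar> \<le> ?inv n"
      using Q(3)[of "\<lambda>j. evalR \<theta> (\<sigma>2 j)" n] m by (simp add: Gn_def evalR_subst \<sigma>2_def)
    show "\<bar>evalR \<theta> (Cn n) - sqrt (GF r c (evalR \<theta> Sp, evalR \<theta> Tp))\<bar> \<le> ?inv n"
      using Qc(3)[of "\<lambda>j. evalR \<theta> (\<sigma>2 j)" n] m by (simp add: Cn_def evalR_subst \<sigma>2_def)
  qed
  have apG': "\<bar>evalR \<theta> (Gn' n) - GF r c (evalR \<theta> Sp, evalR \<theta> Sp + evalR \<theta> Xp)\<bar> \<le> ?inv n"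
    if th: "\<And>j. \<bar>\<theta> j\<bar> \<le> 1" for \<theta> n
  proof -
    have m: "((\<lambda>j. evalR \<theta> (\<sigma>3 j)) 0, (\<lambda>j. evalR \<theta> (\<sigma>3 j)) 1) \<in> R2"
      using rS(1)[of \<theta>, OF th] rS(3)[of \<theta>, OF th] \<kappa>1 by (simp add: \<sigma>3_def R2_iff abs_le_iff)
    show ?thesis using Q(3)[of "\<lambda>j. evalR \<theta> (\<sigma>3 j)" n] m by (simp add: Gn'_def evalR_subst \<sigma>3_def)
  qed
  have cvF: "convergent (\<lambda>n. evalA W (Fn n))"
    by (rule calc_limit[OF saW nW vbs(1) zs(1) apF])
  have cvH: "convergent (\<lambda>n. evalA W (Hn n))"
    by (rule calc_limit[OF saW nW vbs(2) zs(2) apH])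
  have cvG: "convergent (\<lambda>n. evalA W (Gn n))"
    by (rule calc_limit[OF saW nW vbs(3) zs(3) apG])
  have cvC: "convergent (\<lambda>n. evalA W (Cn n))"
    by (rule calc_limit[OF saW nW vbs(4) zs(4) apC])
  obtain hh where hh: "(\<lambda>n. evalA W (Fn n)) \<longlonglongrightarrow> hh" using cvF unfolding convergent_def by blast
  obtain ch where ch: "(\<lambda>n. evalA W (Hn n)) \<longlonglongrightarrow> ch" using cvH unfolding convergent_def by blast
  obtain gg where gg: "(\<lambda>n. evalA W (Gn n)) \<longlonglongrightarrow> gg" using cvG unfolding convergent_def by blast
  obtain cg where cg: "(\<lambda>n. evalA W (Cn n)) \<longlonglongrightarrow> cg" using cvC unfolding convergent_def by blast
  have evS: "evalA W Sp = h" unfolding evalA_def eS by simp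
  have evA: "evalA W (Add Sp Xp) = a" unfolding evalA_def eSX by simp
  have E1: "norm (h - evalA W (Fn n)) \<le> r + 1 * ?inv n" for n
  proof -
    have "h - evalA W (Fn n) = evalA W (Sub Sp (Fn n))" by (simp add: evalA_Sub evS)
    also have "norm \<dots> \<le> r + 1 * ?inv n"
    proof (rule engine[OF saW nW])
      show "vb 5 (Sub Sp (Fn n))" using vbS vbs by simp
      show "evalR (\<lambda>_. 0) (Sub Sp (Fn n)) = 0" using z0 zs by simp
      fix \<theta> :: "nat \<Rightarrow> real" assume th: "\<And>j. \<bar>\<theta> j\<bar> \<le> 1"
      have "\<bar>evalR \<theta> Sp - phiF r (evalR \<theta> Sp)\<bar> \<le> r"
        using phiF_close rS(1)[of \<theta>, OF th] r0 by blast
      moreover have "\<bar>phiF r (evalR \<theta> Sp) - evalR \<theta> (Fn n)\<bar> \<le> ?inv n"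
        using apF[of \<theta> n, OF th] by (simp add: abs_minus_commute)
      ultimately show "\<bar>evalR \<theta> (Sub Sp (Fn n))\<bar> \<le> r + 1 * ?inv n"
        using abs_tri by simp
    qed
    finally show ?thesis .
  qed
  have E2: "norm (evalA W (Gn n)) \<le> 1 + 1 * ?inv n" for n
  proof (rule engine[OF saW nW vbs(3) zs(3)])
    fix \<theta> :: "nat \<Rightarrow> real" assume th: "\<And>j. \<bar>\<theta> j\<bar> \<le> 1"
    have "\<bar>GF r c (evalR \<theta> Sp, evalR \<theta> Tp) - 0\<bar> \<le> 1" using GF_bounds[OF c0] by simp
    from abs_tri[OF apG[of \<theta> n, OF th] this]
    show "\<bar>evalR \<theta> (Gn n)\<bar> \<le> 1 + 1 * ?inv n" by simp
  qed
  have eqG: "evalA W (Gn n) = evalA W (Gn' n)" for n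
  proof -
    have "(\<lambda>j. ?E (\<sigma>2 j)) = (\<lambda>j. ?E (\<sigma>3 j))"
    proof (rule ext)
      fix j
      show "?E (\<sigma>2 j) = ?E (\<sigma>3 j)"
      proof (cases "j = 0")
        case True then show ?thesis by (simp add: \<sigma>2_def \<sigma>3_def)
      next
        case False
        then have "\<sigma>2 j = Tp" "\<sigma>3 j = Add Sp Xp" by (simp_all add: \<sigma>2_def \<sigma>3_def)
        then show ?thesis by (simp only: eT eSX)
      qed
    qed
    then show ?thesis unfolding evalA_def Gn_def Gn'_def evalU_subst by simp
  qed
  have E3: "norm (evalA W (Gn n) * a - evalA W (Fn n)) \<le> 10 * ?inv n" for n
  proof -
    have "evalA W (Gn n) * a - evalA W (Fn n) = evalA W (Sub (Mul (Gn' n) (Add Sp Xp)) (Fn n))"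
      using zs z0 by (simp add: evalA_Sub evalA_Mul eqG evA)
    also have "norm \<dots> \<le> 10 * ?inv n"
    proof (rule engine[OF saW nW])
      show "vb 5 (Sub (Mul (Gn' n) (Add Sp Xp)) (Fn n))" using vbS vbs by simp
      show "evalR (\<lambda>_. 0) (Sub (Mul (Gn' n) (Add Sp Xp)) (Fn n)) = 0" using z0 zs by simp
      fix \<theta> :: "nat \<Rightarrow> real" assume th: "\<And>j. \<bar>\<theta> j\<bar> \<le> 1"
      define s where "s = evalR \<theta> Sp"
      define \<xi> where "\<xi> = evalR \<theta> Xp"
      define q where "q = evalR \<theta> (Gn' n)"
      define p where "p = evalR \<theta> (Fn n)"
      define G where "G = GF r c (s, s + \<xi>)"
      have s08: "0 \<le> s" "s \<le> 8" using rS(1)[of \<theta>, OF th] by (auto simp: s_def)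
      have \<xi>k: "\<bar>\<xi>\<bar> \<le> \<kappa>" using rS(3)[of \<theta>, OF th] by (simp add: \<xi>_def)
      have qG: "\<bar>q - G\<bar> \<le> ?inv n" using apG'[of \<theta> n, OF th] by (simp add: q_def G_def s_def \<xi>_def)
      have pf: "\<bar>phiF r s - p\<bar> \<le> ?inv n" using apF[of \<theta> n, OF th] by (simp add: p_def s_def abs_minus_commute)
      have strip: "G * (s + \<xi>) = phiF r s"
        unfolding G_def by (rule GF_strip[OF c0 cr _ s08(1) \<xi>k]) (use \<kappa>0 in simp)
      have t9: "\<bar>s + \<xi>\<bar> \<le> 9" using s08 \<xi>k \<kappa>1 by (simp add: abs_le_iff)
      have "\<bar>(q - G) * (s + \<xi>)\<bar> \<le> ?inv n * 9" unfolding abs_mult using qG t9 by (intro mult_mono) auto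
      moreover have "q * (s + \<xi>) - p = (q - G) * (s + \<xi>) + (phiF r s - p)" using strip by (simp add: algebra_simps)
      ultimately have "\<bar>q * (s + \<xi>) - p\<bar> \<le> ?inv n * 9 + ?inv n" using pf by (simp add: abs_le_iff)
      then show "\<bar>evalR \<theta> (Sub (Mul (Gn' n) (Add Sp Xp)) (Fn n))\<bar> \<le> 10 * ?inv n"
        by (simp add: q_def p_def s_def \<xi>_def)
    qed
    finally show ?thesis .
  qed
  have E4: "norm (evalA W (Gn n) - evalA W (Cn n) * evalA W (Cn n)) \<le> 4 * ?inv n" for n
  proof -
    have "evalA W (Gn n) - evalA W (Cn n) * evalA W (Cn n) = evalA W (Sub (Gn n) (Mul (Cn n) (Cn n)))"
      using zs by (simp add: evalA_Sub evalA_Mul)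
    also have "norm \<dots> \<le> 4 * ?inv n"
    proof (rule engine[OF saW nW])
      show "vb 5 (Sub (Gn n) (Mul (Cn n) (Cn n)))" using vbs by simp
      show "evalR (\<lambda>_. 0) (Sub (Gn n) (Mul (Cn n) (Cn n))) = 0" using zs by simp
      fix \<theta> :: "nat \<Rightarrow> real" assume th: "\<And>j. \<bar>\<theta> j\<bar> \<le> 1"
      define G where "G = GF r c (evalR \<theta> Sp, evalR \<theta> Tp)"
      have G01: "0 \<le> G" "G \<le> 1" using GF_bounds[OF c0] by (auto simp: G_def)
      have a1: "\<bar>evalR \<theta> (Gn n) - G\<bar> \<le> ?inv n" using apG[of \<theta> n, OF th] by (simp add: G_def)
      have a2: "\<bar>evalR \<theta> (Cn n) - sqrt G\<bar> \<le> ?inv n" using apC[of \<theta> n, OF th] by (simp add: G_def)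
      have "\<bar>evalR \<theta> (Cn n) * evalR \<theta> (Cn n) - sqrt G * sqrt G\<bar> \<le> (2 * 1 + 1) * ?inv n"
        using G01 by (intro sq_diff_bound[OF a2] inv1) auto
      then have "\<bar>G - evalR \<theta> (Cn n) * evalR \<theta> (Cn n)\<bar> \<le> 3 * ?inv n"
        using G01 by (simp add: abs_minus_commute)
      from abs_tri[OF a1 this]
      show "\<bar>evalR \<theta> (Sub (Gn n) (Mul (Cn n) (Cn n)))\<bar> \<le> 4 * ?inv n" by simp
    qed
    finally show ?thesis .
  qed
  have E5: "norm (evalA W (Fn n) - evalA W (Hn n) * evalA W (Hn n)) \<le> 8 * ?inv n" for n
  proof -
    have "evalA W (Fn n) - evalA W (Hn n) * evalA W (Hn n) = evalA W (Sub (Fn n) (Mul (Hn n) (Hn n)))"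
      using zs by (simp add: evalA_Sub evalA_Mul)
    also have "norm \<dots> \<le> 8 * ?inv n"
    proof (rule engine[OF saW nW])
      show "vb 5 (Sub (Fn n) (Mul (Hn n) (Hn n)))" using vbs by simp
      show "evalR (\<lambda>_. 0) (Sub (Fn n) (Mul (Hn n) (Hn n))) = 0" using zs by simp
      fix \<theta> :: "nat \<Rightarrow> real" assume th: "\<And>j. \<bar>\<theta> j\<bar> \<le> 1"
      define F where "F = phiF r (evalR \<theta> Sp)"
      have F8: "F \<le> 8" using phiF_le[OF r0] rS(1)[of \<theta>, OF th] by (auto simp: F_def)
      have F0: "0 \<le> F" "F \<le> 9" using phiF_nonneg F8 by (auto simp: F_def)
      have sF: "sqrt F \<le> 3"
      proof -
        have "sqrt F \<le> sqrt 9" using F0 by (simp only: real_sqrt_le_iff)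
        then show ?thesis by simp
      qed
      have a1: "\<bar>evalR \<theta> (Fn n) - F\<bar> \<le> ?inv n" using apF[of \<theta> n, OF th] by (simp add: F_def)
      have a2: "\<bar>evalR \<theta> (Hn n) - sqrt F\<bar> \<le> ?inv n" using apH[of \<theta> n, OF th] by (simp add: F_def)
      have "\<bar>evalR \<theta> (Hn n) * evalR \<theta> (Hn n) - sqrt F * sqrt F\<bar> \<le> (2 * 3 + 1) * ?inv n"
        using F0 sF by (intro sq_diff_bound[OF a2] inv1) auto
      then have "\<bar>F - evalR \<theta> (Hn n) * evalR \<theta> (Hn n)\<bar> \<le> 7 * ?inv n"
        using F0 by (simp add: abs_minus_commute)
      from abs_tri[OF a1 this]
      show "\<bar>evalR \<theta> (Sub (Fn n) (Mul (Hn n) (Hn n)))\<bar> \<le> 8 * ?inv n" by simp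
    qed
    finally show ?thesis .
  qed
  have gA: "(\<lambda>n. evalA W (Gn n) * a) \<longlonglongrightarrow> gg * a" by (rule tendsto_mult_right[OF gg])
  have gga: "gg * a = hh" by (rule lim_diff_zero[OF gA hh E3])
  have ggc: "gg = cg * cg" by (rule lim_diff_zero[OF gg tendsto_mult[OF cg cg] E4])
  have hhc: "hh = ch * ch" by (rule lim_diff_zero[OF hh tendsto_mult[OF ch ch] E5])
  have scg: "star cg = cg" by (rule star_lim[OF cg star_evalA[OF saW]])
  have sch: "star ch = ch" by (rule star_lim[OF ch star_evalA[OF saW]])
  have pg: "positive gg" unfolding positive_def using ggc scg by metis
  have ph: "positive hh" unfolding positive_def using hhc sch by metis
  have ngg: "norm gg \<le> 1" by (rule lim_norm_le[OF gg E2])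
  have nhh: "norm (h - hh) \<le> r" by (rule lim_norm_le[OF tendsto_diff[OF tendsto_const hh] E1])
  have memF: "evalA W (Fn n) \<in> cstar_gen {h}" for n
  proof -
    have "evalA W (Fn n) = uA (evalU (\<lambda>j. emb ((\<lambda>_. h) j)) (P n))"
      unfolding evalA_def Fn_def evalU_subst \<sigma>1_def eS ..
    also have "\<dots> \<in> cstar_gen {h}"
      by (rule uA_evalU_mem[OF cstar_gen_props(1)]) (use cstar_gen_props(2)[of "{h}"] in auto)
    finally show ?thesis .
  qed
  have memG: "evalA W (Gn n) \<in> cstar_gen {h, a}" for n
  proof -
    have "(\<lambda>j. ?E (\<sigma>2 j)) = (\<lambda>j. emb (if j = 0 then h else a))"
      by (rule ext) (simp add: \<sigma>2_def eS eT)
    then have "evalA W (Gn n) = uA (evalU (\<lambda>j. emb (if j = 0 then h else a)) (Q n))"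
      unfolding evalA_def Gn_def evalU_subst by simp
    also have "\<dots> \<in> cstar_gen {h, a}"
      by (rule uA_evalU_mem[OF cstar_gen_props(1)]) (use cstar_gen_props(2)[of "{h, a}"] in auto)
    finally show ?thesis .
  qed
  have hh_mem: "hh \<in> cstar_gen {h}" by (rule closed_mem_lim[OF cstar_gen_props(1) memF hh])
  have gg_mem: "gg \<in> cstar_gen {h, a}" by (rule closed_mem_lim[OF cstar_gen_props(1) memG gg])
  show ?thesis
    using hh_mem ph gg_mem pg nhh r\<delta> ngg gga by (intro exI[of _ hh] exI[of _ gg]) auto
qed


end
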